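(* Let $\theta\in\mathbb{R}\setminus\mathbb{Q}$, let $A_\theta$ be the irrational rotation C*-algebra generated by unitaries $U,V$ with $UV=e^{2\pi i\theta}VU$, and let $a=\sum_{(m,n)\in\mathbb{Z}^2} a_{m,n}U^mV^n\in A_\theta^\infty$ with $a>0$, $a_{0,0}=1$, and only finitely many of the coefficients $a_{m,n}$ nonzero. For $r\in\mathbb{C}$ put $$x_r=\sum_{(m,n)\in\mathbb{Z}^2,\ (m,n)\neq(0,0)} a_{m,n}\, r^{|m|+|n|}\, U^mV^n,\qquad P_r(a)=1+x_r .$$ Then there is an open neighbourhood $W$ of $[0,1]$ in $\mathbb{C}$ such that for every $r\in W$ the element $\log P_r(a)$ can be defined (via the holomorphic functional calculus with the standard branch of the logarithm).
   Context: $A_\theta^\infty=\{\sum_{(m,n)\in\mathbb{Z}^2}a_{m,n}U^mV^n : (a_{m,n}) \text{ rapidly decreasing}\}$ is the smooth noncommutative two torus, a dense *-subalgebra of $A_\theta$. The notation $a>0$ means $a$ is self-adjoint with spectrum contained in $(0,\infty)$ (strictly positive). *)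

theory Defs
  imports "HOL-Analysis.Analysis"
begin

text \<open>An element sum a(m,n) U^m V^n with finitely many nonzero coefficients is
  represented by its coefficient function a :: int*int => complex.
  Relation U V = e^{2 pi i theta} V U gives
  (U^m V^n)(U^k V^l) = e^{-2 pi i theta n k} U^{m+k} V^{n+l}
  and (U^m V^n)^* = e^{-2 pi i theta m n} U^{-m} V^{-n}.
  The C*-norm is the operator norm in the (faithful) regular representation on
  l2(Z^2), computed on the dense subspace of finitely supported vectors; A_theta is
  the completion, so invertibility in A_theta is the existence of a norm-Cauchy
  sequence of finite elements converging to a two-sided inverse.\<close>

type_synonym coeffs = "int \<times> int \<Rightarrow> complex"

definition supp2 :: "coeffs \<Rightarrow> (int \<times> int) set" where
  "supp2 f = {k. f k \<noteq> 0}"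

definition finsupp2 :: "coeffs \<Rightarrow> bool" where
  "finsupp2 f \<longleftrightarrow> finite (supp2 f)"

text \<open>Twisted convolution product (also the left regular representation on l2(Z^2)).\<close>
definition twprod :: "real \<Rightarrow> coeffs \<Rightarrow> coeffs \<Rightarrow> coeffs" where
  "twprod \<theta> f g = (\<lambda>(p, q). \<Sum>(m, n)\<in>supp2 f.
      f (m, n) * g (p - m, q - n) * cis (- 2 * pi * \<theta> * of_int (n * (p - m))))"

definition twstar :: "real \<Rightarrow> coeffs \<Rightarrow> coeffs" where
  "twstar \<theta> f = (\<lambda>(p, q). cnj (f (- p, - q)) * cis (- 2 * pi * \<theta> * of_int (p * q)))"

definition twone :: coeffs where
  "twone = (\<lambda>k. if k = (0, 0) then 1 else 0)"

definition l2norm :: "coeffs \<Rightarrow> real" where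
  "l2norm \<xi> = sqrt (\<Sum>k\<in>supp2 \<xi>. (cmod (\<xi> k))\<^sup>2)"

definition twnorm :: "real \<Rightarrow> coeffs \<Rightarrow> real" where
  "twnorm \<theta> f = Sup {l2norm (twprod \<theta> f \<xi>) | \<xi>. finsupp2 \<xi> \<and> l2norm \<xi> \<le> 1}"

definition tw_invertible :: "real \<Rightarrow> coeffs \<Rightarrow> bool" where
  "tw_invertible \<theta> x \<longleftrightarrow>
     (\<exists>y :: nat \<Rightarrow> coeffs. (\<forall>k. finsupp2 (y k)) \<and>
        (\<forall>e>0. \<exists>N. \<forall>i\<ge>N. \<forall>j\<ge>N. twnorm \<theta> (y i - y j) < e) \<and>
        (\<lambda>k. twnorm \<theta> (twprod \<theta> x (y k) - twone)) \<longlonglongrightarrow> 0 \<and>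
        (\<lambda>k. twnorm \<theta> (twprod \<theta> (y k) x - twone)) \<longlonglongrightarrow> 0)"

definition tw_spectrum :: "real \<Rightarrow> coeffs \<Rightarrow> complex set" where
  "tw_spectrum \<theta> x = {z. \<not> tw_invertible \<theta> (x - (\<lambda>k. z * twone k))}"

definition tw_strictly_pos :: "real \<Rightarrow> coeffs \<Rightarrow> bool" where
  "tw_strictly_pos \<theta> a \<longleftrightarrow> twstar \<theta> a = a \<and> tw_spectrum \<theta> a \<subseteq> complex_of_real ` {0<..}"

definition P_r :: "coeffs \<Rightarrow> complex \<Rightarrow> coeffs" where
  "P_r a r = (\<lambda>(m, n). if (m, n) = (0, 0) then 1
                        else a (m, n) * r ^ (nat \<bar>m\<bar> + nat \<bar>n\<bar>))"

text \<open>log x is definable by the holomorphic functional calculus with the principal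
  branch Ln: Ln is holomorphic on an open neighbourhood of the spectrum of x.\<close>
definition tw_log_definable :: "real \<Rightarrow> coeffs \<Rightarrow> bool" where
  "tw_log_definable \<theta> x \<longleftrightarrow>
     (\<exists>\<Omega>. open \<Omega> \<and> tw_spectrum \<theta> x \<subseteq> \<Omega> \<and> Ln holomorphic_on \<Omega>)"

end

theory Submission
  imports Defs
begin


context fixes \<theta> :: real begin

definition ph :: "int \<times> int \<Rightarrow> int \<times> int \<Rightarrow> complex" where
  "ph k p = cis (- 2 * pi * \<theta> * of_int (snd k * (fst p - fst k)))"

lemma twprod_eq:
  assumes "finite S" "supp2 f \<subseteq> S"
  shows "twprod \<theta> f g p = (\<Sum>k\<in>S. f k * g (p - k) * ph k p)"
proof -
  have "twprod \<theta> f g p = (\<Sum>k\<in>supp2 f. f k * g (p - k) * ph k p)"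
    by (cases p) (simp add: twprod_def ph_def case_prod_beta' split_def minus_prod_def)
  also have "\<dots> = (\<Sum>k\<in>S. f k * g (p - k) * ph k p)"
    using assms by (intro sum.mono_neutral_left) (auto simp: supp2_def)
  finally show ?thesis .
qed

lemma ph_zero_left[simp]: "ph 0 p = 1" by (simp add: ph_def)
lemma ph_self[simp]: "ph p p = 1" by (simp add: ph_def)

lemma ph_cocycle: "ph k (k + l) * ph (k + l) p = ph l (p - k) * ph k p"
  unfolding ph_def cis_mult by (rule arg_cong[where f=cis]) (simp add: algebra_simps)

end


lemma finsupp2_iff: "finsupp2 f \<longleftrightarrow> finite {k. f k \<noteq> 0}" by (simp add: finsupp2_def supp2_def)

lemma supp2_subI: "(\<And>k. f k \<noteq> 0 \<Longrightarrow> k \<in> S) \<Longrightarrow> supp2 f \<subseteq> S" by (auto simp: supp2_def)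

lemma finsupp2_subI: "finite S \<Longrightarrow> (\<And>k. f k \<noteq> 0 \<Longrightarrow> k \<in> S) \<Longrightarrow> finsupp2 f"
  unfolding finsupp2_def by (meson finite_subset supp2_subI)

lemma finsupp2_add[intro]: "finsupp2 f \<Longrightarrow> finsupp2 g \<Longrightarrow> finsupp2 (\<lambda>k. f k + g k)"
  by (rule finsupp2_subI[where S="supp2 f \<union> supp2 g"]) (auto simp: finsupp2_def supp2_def)
lemma finsupp2_diff[intro]: "finsupp2 f \<Longrightarrow> finsupp2 g \<Longrightarrow> finsupp2 (\<lambda>k. f k - g k)"
  by (rule finsupp2_subI[where S="supp2 f \<union> supp2 g"]) (auto simp: finsupp2_def supp2_def)
lemma finsupp2_minus[intro]: "finsupp2 f \<Longrightarrow> finsupp2 g \<Longrightarrow> finsupp2 (f - g)"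
  by (rule finsupp2_subI[where S="supp2 f \<union> supp2 g"]) (auto simp: finsupp2_def supp2_def)
lemma finsupp2_smul[intro]: "finsupp2 f \<Longrightarrow> finsupp2 (\<lambda>k. c * f k)"
  by (rule finsupp2_subI[where S="supp2 f"]) (auto simp: finsupp2_def supp2_def)
lemma finsupp2_mult[intro]: "finsupp2 f \<Longrightarrow> finsupp2 (\<lambda>k. f k * c k)"
  by (rule finsupp2_subI[where S="supp2 f"]) (auto simp: finsupp2_def supp2_def)
lemma twone_eq: "twone k = (if k = 0 then 1 else 0)" by (simp add: twone_def zero_prod_def)
lemma supp2_twone: "supp2 twone = {0}" by (auto simp: supp2_def twone_eq)
lemma finsupp2_twone[intro]: "finsupp2 twone" by (simp add: finsupp2_def supp2_twone)
lemma finsupp2_zero[intro]: "finsupp2 (\<lambda>k. 0)" by (simp add: finsupp2_def supp2_def)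

context fixes \<theta> :: real begin

lemma supp2_twprod: assumes "finsupp2 f" shows "supp2 (twprod \<theta> f g) \<subseteq> (\<lambda>(a,b). a + b) ` (supp2 f \<times> supp2 g)"
proof (rule supp2_subI)
  fix p assume "twprod \<theta> f g p \<noteq> 0"
  then have "(\<Sum>k\<in>supp2 f. f k * g (p - k) * ph \<theta> k p) \<noteq> 0"
    using twprod_eq[OF _ order_refl, where f=f and g=g and p=p and \<theta>=\<theta>] assms by (simp add: finsupp2_def)
  then obtain k where "k \<in> supp2 f" "f k * g (p - k) * ph \<theta> k p \<noteq> 0" by (meson sum.neutral)
  then have k: "k \<in> supp2 f" "g (p - k) \<in> UNIV - {0}" by auto
  show "p \<in> (\<lambda>(a,b). a + b) ` (supp2 f \<times> supp2 g)"
    by (rule rev_image_eqI[of "(k, p - k)"]) (use k in \<open>simp_all add: supp2_def\<close>)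
qed

lemma finsupp2_twprod[intro]: "finsupp2 f \<Longrightarrow> finsupp2 g \<Longrightarrow> finsupp2 (twprod \<theta> f g)"
  unfolding finsupp2_def by (rule finite_subset[OF supp2_twprod]) (auto simp: finsupp2_def)

lemma twprod_zero_right: "twprod \<theta> f (\<lambda>k. 0) = (\<lambda>k. 0)"
  by (auto simp: twprod_def fun_eq_iff)

lemma twprod_eq': "finsupp2 f \<Longrightarrow> supp2 f \<subseteq> S \<Longrightarrow> finite S \<Longrightarrow>
   twprod \<theta> f g = (\<lambda>p. \<Sum>k\<in>S. f k * g (p - k) * ph \<theta> k p)"
  using twprod_eq by blast

lemma twprod_add_left:
  assumes "finsupp2 f" "finsupp2 g"
  shows "twprod \<theta> (\<lambda>k. f k + g k) h = (\<lambda>p. twprod \<theta> f h p + twprod \<theta> g h p)"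
proof -
  let ?S = "supp2 f \<union> supp2 g"
  have fin: "finite ?S" using assms by (auto simp: finsupp2_def)
  have s: "supp2 (\<lambda>k. f k + g k) \<subseteq> ?S" by (auto simp: supp2_def)
  show ?thesis
    by (simp add: twprod_eq[OF fin s] twprod_eq[OF fin] fun_eq_iff sum.distrib[symmetric] algebra_simps)
qed

lemma twprod_diff_left:
  assumes "finsupp2 f" "finsupp2 g"
  shows "twprod \<theta> (\<lambda>k. f k - g k) h = (\<lambda>p. twprod \<theta> f h p - twprod \<theta> g h p)"
proof -
  let ?S = "supp2 f \<union> supp2 g"
  have fin: "finite ?S" using assms by (auto simp: finsupp2_def)
  have s: "supp2 (\<lambda>k. f k - g k) \<subseteq> ?S" by (auto simp: supp2_def)
  show ?thesis
    by (simp add: twprod_eq[OF fin s] twprod_eq[OF fin] fun_eq_iff sum_subtractf[symmetric] algebra_simps)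
qed

lemma twprod_smul_left:
  assumes "finsupp2 f"
  shows "twprod \<theta> (\<lambda>k. c * f k) h = (\<lambda>p. c * twprod \<theta> f h p)"
proof -
  have fin: "finite (supp2 f)" using assms by (auto simp: finsupp2_def)
  have s: "supp2 (\<lambda>k. c * f k) \<subseteq> supp2 f" by (auto simp: supp2_def)
  show ?thesis
    by (simp add: twprod_eq[OF fin s] twprod_eq[OF fin] fun_eq_iff sum_distrib_left algebra_simps)
qed

lemma twprod_add_right:
  "twprod \<theta> f (\<lambda>k. g k + h k) = (\<lambda>p. twprod \<theta> f g p + twprod \<theta> f h p)"
  by (simp add: twprod_def fun_eq_iff sum.distrib[symmetric] algebra_simps split_def)

lemma twprod_diff_right:
  "twprod \<theta> f (\<lambda>k. g k - h k) = (\<lambda>p. twprod \<theta> f g p - twprod \<theta> f h p)"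
  by (simp add: twprod_def fun_eq_iff sum_subtractf[symmetric] algebra_simps split_def)

lemma twprod_smul_right:
  "twprod \<theta> f (\<lambda>k. c * g k) = (\<lambda>p. c * twprod \<theta> f g p)"
  by (simp add: twprod_def fun_eq_iff sum_distrib_left algebra_simps split_def)

lemma twprod_one_left: "twprod \<theta> twone g = g"
proof -
  have "twprod \<theta> twone g p = g p" for p
    by (simp add: twprod_eq[of "{0}"] supp2_twone twone_eq)
  then show ?thesis by auto
qed

lemma twprod_one_right:
  assumes "finsupp2 f" shows "twprod \<theta> f twone = f"
proof -
  have "twprod \<theta> f twone p = f p" for p
  proof -
    have fin: "finite (insert p (supp2 f))" using assms by (auto simp: finsupp2_def)
    have t: "twone (p - k) = (if p = k then 1 else 0)" for k
      unfolding twone_eq by (metis eq_iff_diff_eq_0)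
    have "twprod \<theta> f twone p = (\<Sum>k\<in>insert p (supp2 f). if p = k then f k * ph \<theta> k p else 0)"
      unfolding twprod_eq[OF fin subset_insertI] t by (rule sum.cong) simp_all
    also have "\<dots> = f p" using fin by (simp add: sum.delta')
    finally show ?thesis .
  qed
  then show ?thesis by auto
qed


lemma sum_shift:
  fixes F :: "int \<times> int \<Rightarrow> 'b::comm_monoid_add"
  assumes "finite T" "(+) k ` B \<subseteq> T" "\<And>j. j \<in> T \<Longrightarrow> j \<notin> (+) k ` B \<Longrightarrow> F j = 0"
  shows "sum F T = (\<Sum>l\<in>B. F (k + l))"
proof -
  have "sum F T = sum F ((+) k ` B)"
    by (rule sum.mono_neutral_right[OF assms(1) assms(2)]) (use assms(3) in blast)
  also have "\<dots> = (\<Sum>l\<in>B. F (k + l))" by (simp add: sum.reindex inj_on_def o_def)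
  finally show ?thesis .
qed

lemma twprod_assoc:
  assumes f: "finsupp2 f" and g: "finsupp2 g"
  shows "twprod \<theta> (twprod \<theta> f g) h = twprod \<theta> f (twprod \<theta> g h)"
proof
  fix p
  let ?Sf = "supp2 f" and ?Sg = "supp2 g"
  let ?Sfg = "(\<lambda>(a,b). a + b) ` (?Sf \<times> ?Sg)"
  have fSf: "finite ?Sf" and fSg: "finite ?Sg" using f g by (auto simp: finsupp2_def)
  have fSfg: "finite ?Sfg" using fSf fSg by auto
  have "twprod \<theta> (twprod \<theta> f g) h p = (\<Sum>j\<in>?Sfg. twprod \<theta> f g j * h (p - j) * ph \<theta> j p)"
    by (rule twprod_eq[OF fSfg supp2_twprod[OF f]])
  also have "\<dots> = (\<Sum>j\<in>?Sfg. \<Sum>k\<in>?Sf. f k * g (j - k) * ph \<theta> k j * h (p - j) * ph \<theta> j p)"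
    by (simp add: twprod_eq[OF fSf] sum_distrib_right)
  also have "\<dots> = (\<Sum>k\<in>?Sf. \<Sum>j\<in>?Sfg. f k * g (j - k) * ph \<theta> k j * h (p - j) * ph \<theta> j p)"
    by (rule sum.swap)
  also have "\<dots> = (\<Sum>k\<in>?Sf. \<Sum>l\<in>?Sg. f k * g l * ph \<theta> k (k + l) * h (p - k - l) * ph \<theta> (k + l) p)"
  proof (rule sum.cong[OF refl])
    fix k assume k: "k \<in> ?Sf"
    show "(\<Sum>j\<in>?Sfg. f k * g (j - k) * ph \<theta> k j * h (p - j) * ph \<theta> j p) =
          (\<Sum>l\<in>?Sg. f k * g l * ph \<theta> k (k + l) * h (p - k - l) * ph \<theta> (k + l) p)"
    proof (subst sum_shift[OF fSfg, of k ?Sg])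
      show "(+) k ` ?Sg \<subseteq> ?Sfg"
      proof (rule subsetI)
        fix x assume "x \<in> (+) k ` ?Sg"
        then obtain l where l: "l \<in> ?Sg" "x = k + l" by blast
        show "x \<in> ?Sfg" by (rule rev_image_eqI[of "(k, l)"]) (use k l in simp_all)
      qed
    next
      fix j assume nj: "j \<notin> (+) k ` ?Sg"
      have "g (j - k) = 0"
      proof (rule ccontr)
        assume "g (j - k) \<noteq> 0"
        then have "j - k \<in> ?Sg" by (simp add: supp2_def)
        then have "j \<in> (+) k ` ?Sg" by (rule rev_image_eqI) simp
        with nj show False by blast
      qed
      then show "f k * g (j - k) * ph \<theta> k j * h (p - j) * ph \<theta> j p = 0" by simp
    qed (simp add: diff_diff_eq)
  qed
  also have "\<dots> = (\<Sum>k\<in>?Sf. \<Sum>l\<in>?Sg. f k * g l * h (p - k - l) * (ph \<theta> l (p - k) * ph \<theta> k p))"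
    by (intro sum.cong refl) (subst ph_cocycle[symmetric], simp add: mult_ac)
  also have "\<dots> = (\<Sum>k\<in>?Sf. f k * (\<Sum>l\<in>?Sg. g l * h (p - k - l) * ph \<theta> l (p - k)) * ph \<theta> k p)"
    by (intro sum.cong refl) (simp add: sum_distrib_left sum_distrib_right mult_ac)
  also have "\<dots> = twprod \<theta> f (twprod \<theta> g h) p"
    by (simp add: twprod_eq[OF fSf] twprod_eq[OF fSg])
  finally show "twprod \<theta> (twprod \<theta> f g) h p = twprod \<theta> f (twprod \<theta> g h) p" .
qed

end

definition ip :: "coeffs \<Rightarrow> coeffs \<Rightarrow> complex" where
  "ip u v = (\<Sum>k\<in>supp2 u. u k * cnj (v k))"

definition l1 :: "coeffs \<Rightarrow> real" where
  "l1 f = (\<Sum>k\<in>supp2 f. cmod (f k))"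

lemma l1_eq: "finite S \<Longrightarrow> supp2 f \<subseteq> S \<Longrightarrow> l1 f = (\<Sum>k\<in>S. cmod (f k))"
  unfolding l1_def by (rule sum.mono_neutral_left) (auto simp: supp2_def)

lemma l1_nonneg: "0 \<le> l1 f" unfolding l1_def by (simp add: sum_nonneg)

lemma ip_eq: "finite S \<Longrightarrow> supp2 u \<subseteq> S \<Longrightarrow> ip u v = (\<Sum>k\<in>S. u k * cnj (v k))"
  unfolding ip_def by (rule sum.mono_neutral_left) (auto simp: supp2_def)

lemma ip_eq2:
  assumes "finsupp2 u" "finite S" "supp2 v \<subseteq> S"
  shows "ip u v = (\<Sum>k\<in>S. u k * cnj (v k))"
proof -
  have f: "finite (S \<union> supp2 u)" using assms by (auto simp: finsupp2_def)
  have "ip u v = (\<Sum>k\<in>S \<union> supp2 u. u k * cnj (v k))" by (rule ip_eq[OF f]) auto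
  also have "\<dots> = (\<Sum>k\<in>S. u k * cnj (v k))"
    using assms f by (intro sum.mono_neutral_right) (auto simp: supp2_def)
  finally show ?thesis .
qed

lemma l2norm_eq: "finite S \<Longrightarrow> supp2 u \<subseteq> S \<Longrightarrow> l2norm u = L2_set (\<lambda>k. cmod (u k)) S"
  unfolding l2norm_def L2_set_def by (rule arg_cong[where f=sqrt], rule sum.mono_neutral_left) (auto simp: supp2_def)

lemma l2norm_nonneg: "0 \<le> l2norm u" unfolding l2norm_def by (simp add: sum_nonneg)

lemma l2norm_sq: "finite S \<Longrightarrow> supp2 u \<subseteq> S \<Longrightarrow> (l2norm u)\<^sup>2 = (\<Sum>k\<in>S. (cmod (u k))\<^sup>2)"
  by (simp add: l2norm_eq L2_set_def sum_nonneg)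

lemma ip_self: "finsupp2 u \<Longrightarrow> ip u u = of_real ((l2norm u)\<^sup>2)"
proof -
  assume a: "finsupp2 u"
  have "ip u u = (\<Sum>k\<in>supp2 u. complex_of_real ((cmod (u k))\<^sup>2))"
    unfolding ip_def by (rule sum.cong) (simp_all only: complex_norm_square)
  then show ?thesis using a unfolding finsupp2_def by (simp add: l2norm_sq[OF _ order_refl])
qed

lemma ip_cnj:
  assumes "finsupp2 u" "finsupp2 v" shows "ip v u = cnj (ip u v)"
proof -
  let ?S = "supp2 u \<union> supp2 v"
  have f: "finite ?S" using assms by (auto simp: finsupp2_def)
  show ?thesis by (simp add: ip_eq[OF f] cnj_sum mult.commute)
qed

lemma ip_add_left:
  assumes "finsupp2 f" "finsupp2 g"
  shows "ip (\<lambda>k. f k + g k) v = ip f v + ip g v"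
proof -
  let ?S = "supp2 f \<union> supp2 g"
  have f: "finite ?S" using assms by (auto simp: finsupp2_def)
  have s: "supp2 (\<lambda>k. f k + g k) \<subseteq> ?S" by (auto simp: supp2_def)
  show ?thesis by (simp add: ip_eq[OF f s] ip_eq[OF f] sum.distrib[symmetric] algebra_simps)
qed

lemma ip_diff_left:
  assumes "finsupp2 f" "finsupp2 g"
  shows "ip (\<lambda>k. f k - g k) v = ip f v - ip g v"
proof -
  let ?S = "supp2 f \<union> supp2 g"
  have f: "finite ?S" using assms by (auto simp: finsupp2_def)
  have s: "supp2 (\<lambda>k. f k - g k) \<subseteq> ?S" by (auto simp: supp2_def)
  show ?thesis by (simp add: ip_eq[OF f s] ip_eq[OF f] sum_subtractf[symmetric] algebra_simps)
qed

lemma ip_smul_left: "finsupp2 f \<Longrightarrow> ip (\<lambda>k. c * f k) v = c * ip f v"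
proof -
  assume a: "finsupp2 f"
  have f: "finite (supp2 f)" using a by (auto simp: finsupp2_def)
  have s: "supp2 (\<lambda>k. c * f k) \<subseteq> supp2 f" by (auto simp: supp2_def)
  show ?thesis by (simp add: ip_eq[OF f s] ip_eq[OF f] sum_distrib_left algebra_simps)
qed

lemma ip_add_right: "ip u (\<lambda>k. f k + g k) = ip u f + ip u g"
  by (simp add: ip_def sum.distrib[symmetric] algebra_simps)
lemma ip_diff_right: "ip u (\<lambda>k. f k - g k) = ip u f - ip u g"
  by (simp add: ip_def sum_subtractf[symmetric] algebra_simps)
lemma ip_smul_right: "ip u (\<lambda>k. c * f k) = cnj c * ip u f"
  by (simp add: ip_def sum_distrib_left algebra_simps)

lemma ip_cs:
  assumes "finsupp2 u" "finsupp2 v" shows "cmod (ip u v) \<le> l2norm u * l2norm v"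
proof -
  let ?S = "supp2 u \<union> supp2 v"
  have f: "finite ?S" using assms by (auto simp: finsupp2_def)
  have "cmod (ip u v) \<le> (\<Sum>k\<in>?S. cmod (u k * cnj (v k)))"
    by (simp add: ip_eq[OF f] norm_sum del: complex_cnj_mult)
  also have "\<dots> = (\<Sum>k\<in>?S. \<bar>cmod (u k)\<bar> * \<bar>cmod (v k)\<bar>)" by (simp add: norm_mult)
  also have "\<dots> \<le> L2_set (\<lambda>k. cmod (u k)) ?S * L2_set (\<lambda>k. cmod (v k)) ?S" by (rule L2_set_mult_ineq)
  also have "\<dots> = l2norm u * l2norm v" by (simp add: l2norm_eq[OF f])
  finally show ?thesis .
qed

lemma l2norm_triangle:
  assumes "finsupp2 u" "finsupp2 v" shows "l2norm (\<lambda>k. u k + v k) \<le> l2norm u + l2norm v"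
proof -
  let ?S = "supp2 u \<union> supp2 v"
  have f: "finite ?S" using assms by (auto simp: finsupp2_def)
  have s: "supp2 (\<lambda>k. u k + v k) \<subseteq> ?S" by (auto simp: supp2_def)
  have "l2norm (\<lambda>k. u k + v k) = L2_set (\<lambda>k. cmod (u k + v k)) ?S" by (rule l2norm_eq[OF f s])
  also have "\<dots> \<le> L2_set (\<lambda>k. cmod (u k) + cmod (v k)) ?S"
    by (rule L2_set_mono) (auto intro: norm_triangle_ineq)
  also have "\<dots> \<le> L2_set (\<lambda>k. cmod (u k)) ?S + L2_set (\<lambda>k. cmod (v k)) ?S" by (rule L2_set_triangle_ineq)
  also have "\<dots> = l2norm u + l2norm v" by (simp add: l2norm_eq[OF f])
  finally show ?thesis .
qed

lemma l2norm_smul: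
  assumes "finsupp2 u" shows "l2norm (\<lambda>k. c * u k) = cmod c * l2norm u"
proof -
  have f: "finite (supp2 u)" using assms by (auto simp: finsupp2_def)
  have s: "supp2 (\<lambda>k. c * u k) \<subseteq> supp2 u" by (auto simp: supp2_def)
  show ?thesis by (simp add: l2norm_eq[OF f s] l2norm_eq[OF f] L2_set_right_distrib norm_mult)
qed

lemma l2norm_zero_iff: "finsupp2 u \<Longrightarrow> l2norm u = 0 \<longleftrightarrow> u = (\<lambda>k. 0)"
  unfolding finsupp2_def by (auto simp: l2norm_eq[OF _ order_refl] L2_set_eq_0_iff supp2_def)

lemma l2norm_zero[simp]: "l2norm (\<lambda>k. 0) = 0" by (simp add: l2norm_def supp2_def)

lemma finsupp2_sum:
  "finite K \<Longrightarrow> (\<And>i. i \<in> K \<Longrightarrow> finsupp2 (G i)) \<Longrightarrow> finsupp2 (\<lambda>p. \<Sum>i\<in>K. G i p)"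
  by (induction K rule: finite_induct) auto

lemma l2norm_sum:
  "finite K \<Longrightarrow> (\<And>i. i \<in> K \<Longrightarrow> finsupp2 (G i)) \<Longrightarrow> l2norm (\<lambda>p. \<Sum>i\<in>K. G i p) \<le> (\<Sum>i\<in>K. l2norm (G i))"
proof (induction K rule: finite_induct)
  case (insert x F)
  have "l2norm (\<lambda>p. \<Sum>i\<in>insert x F. G i p) = l2norm (\<lambda>p. G x p + (\<Sum>i\<in>F. G i p))"
    using insert by simp
  also have "\<dots> \<le> l2norm (G x) + l2norm (\<lambda>p. \<Sum>i\<in>F. G i p)"
    using insert by (intro l2norm_triangle finsupp2_sum) auto
  also have "\<dots> \<le> l2norm (G x) + (\<Sum>i\<in>F. l2norm (G i))" using insert by simp
  finally show ?case using insert by simp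
qed simp

lemma l2norm_shift:
  assumes "finsupp2 \<xi>" "\<And>p. cmod (c p) = 1"
  shows "l2norm (\<lambda>p. \<xi> (p - k) * c p) = l2norm \<xi>"
proof -
  have f: "finite (supp2 \<xi>)" using assms by (auto simp: finsupp2_def)
  have f2: "finite ((+) k ` supp2 \<xi>)" using f by auto
  have s: "supp2 (\<lambda>p. \<xi> (p - k) * c p) \<subseteq> (+) k ` supp2 \<xi>"
  proof (rule supp2_subI)
    fix p assume "\<xi> (p - k) * c p \<noteq> 0"
    then have "p - k \<in> supp2 \<xi>" by (simp add: supp2_def)
    then show "p \<in> (+) k ` supp2 \<xi>" by (rule rev_image_eqI) simp
  qed
  have "(\<Sum>p\<in>(+) k ` supp2 \<xi>. (cmod (\<xi> (p - k) * c p))\<^sup>2) = (\<Sum>q\<in>supp2 \<xi>. (cmod (\<xi> q))\<^sup>2)"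
    by (simp add: sum.reindex inj_on_def norm_mult assms(2))
  then show ?thesis by (simp add: l2norm_eq[OF f2 s] l2norm_eq[OF f order_refl] L2_set_def)
qed

lemma finsupp2_shift: "finsupp2 \<xi> \<Longrightarrow> finsupp2 (\<lambda>p. \<xi> (p - k) * c p)"
proof -
  assume a: "finsupp2 \<xi>"
  show ?thesis
  proof (rule finsupp2_subI[where S="(+) k ` supp2 \<xi>"])
    show "finite ((+) k ` supp2 \<xi>)" using a by (auto simp: finsupp2_def)
    fix p assume "\<xi> (p - k) * c p \<noteq> 0"
    then have "p - k \<in> supp2 \<xi>" by (simp add: supp2_def)
    then show "p \<in> (+) k ` supp2 \<xi>" by (rule rev_image_eqI) simp
  qed
qed

context fixes \<theta> :: real begin

lemma norm_ph[simp]: "cmod (ph \<theta> k p) = 1" by (simp add: ph_def)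

lemma twprod_l2:
  assumes f: "finsupp2 f" and x: "finsupp2 \<xi>"
  shows "l2norm (twprod \<theta> f \<xi>) \<le> l1 f * l2norm \<xi>"
proof -
  have fS: "finite (supp2 f)" using f by (auto simp: finsupp2_def)
  have "l2norm (twprod \<theta> f \<xi>) = l2norm (\<lambda>p. \<Sum>k\<in>supp2 f. f k * (\<xi> (p - k) * ph \<theta> k p))"
    by (simp add: twprod_eq'[OF f order_refl fS] mult.assoc)
  also have "\<dots> \<le> (\<Sum>k\<in>supp2 f. l2norm (\<lambda>p. f k * (\<xi> (p - k) * ph \<theta> k p)))"
    by (rule l2norm_sum[OF fS]) (intro finsupp2_smul finsupp2_shift x)
  also have "\<dots> = (\<Sum>k\<in>supp2 f. cmod (f k) * l2norm \<xi>)"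
    by (intro sum.cong refl) (simp add: l2norm_smul finsupp2_shift x l2norm_shift)
  also have "\<dots> = l1 f * l2norm \<xi>" by (simp add: l1_def sum_distrib_right)
  finally show ?thesis .
qed

end


context fixes \<theta> :: real begin

lemma twnorm_bdd:
  assumes f: "finsupp2 f"
  shows "bdd_above {l2norm (twprod \<theta> f \<xi>) | \<xi>. finsupp2 \<xi> \<and> l2norm \<xi> \<le> 1}"
proof (rule bdd_aboveI)
  fix x assume "x \<in> {l2norm (twprod \<theta> f \<xi>) | \<xi>. finsupp2 \<xi> \<and> l2norm \<xi> \<le> 1}"
  then obtain \<xi> where x: "x = l2norm (twprod \<theta> f \<xi>)" "finsupp2 \<xi>" "l2norm \<xi> \<le> 1" by blast
  have "x \<le> l1 f * l2norm \<xi>" using twprod_l2[OF f x(2)] x(1) by simp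
  also have "\<dots> \<le> l1 f * 1" by (rule mult_left_mono[OF x(3) l1_nonneg])
  finally show "x \<le> l1 f" by simp
qed

lemma twnorm_upper:
  assumes f: "finsupp2 f" and "finsupp2 \<xi>" "l2norm \<xi> \<le> 1"
  shows "l2norm (twprod \<theta> f \<xi>) \<le> twnorm \<theta> f"
  unfolding twnorm_def by (rule cSup_upper[OF _ twnorm_bdd[OF f]]) (use assms in blast)

lemma twnorm_nonneg: "finsupp2 f \<Longrightarrow> 0 \<le> twnorm \<theta> f"
proof -
  assume f: "finsupp2 f"
  have "l2norm (twprod \<theta> f (\<lambda>k. 0)) \<le> twnorm \<theta> f" by (rule twnorm_upper[OF f]) auto
  then show ?thesis by (simp add: twprod_zero_right)
qed

lemma twnorm_bound:
  assumes f: "finsupp2 f" and x: "finsupp2 \<xi>"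
  shows "l2norm (twprod \<theta> f \<xi>) \<le> twnorm \<theta> f * l2norm \<xi>"
proof (cases "l2norm \<xi> = 0")
  case True
  then have "\<xi> = (\<lambda>k. 0)" using l2norm_zero_iff[OF x] by simp
  then show ?thesis by (simp add: twprod_zero_right)
next
  case False
  then have pos: "l2norm \<xi> > 0" using l2norm_nonneg[of \<xi>] by linarith
  let ?c = "complex_of_real (1 / l2norm \<xi>)"
  have x1: "finsupp2 (\<lambda>k. ?c * \<xi> k)" by (rule finsupp2_smul[OF x])
  have n1: "l2norm (\<lambda>k. ?c * \<xi> k) = 1" by (subst l2norm_smul[OF x]) (use pos in \<open>simp add: norm_divide\<close>)
  have "l2norm (twprod \<theta> f (\<lambda>k. ?c * \<xi> k)) \<le> twnorm \<theta> f"
    by (rule twnorm_upper[OF f x1]) (use n1 in linarith)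
  moreover have "l2norm (twprod \<theta> f (\<lambda>k. ?c * \<xi> k)) = l2norm (twprod \<theta> f \<xi>) / l2norm \<xi>"
    unfolding twprod_smul_right by (subst l2norm_smul[OF finsupp2_twprod[OF f x]]) (use pos in \<open>simp add: norm_divide\<close>)
  ultimately have "l2norm (twprod \<theta> f \<xi>) / l2norm \<xi> \<le> twnorm \<theta> f" by simp
  then show ?thesis using pos by (simp add: divide_le_eq mult.commute)
qed

lemma twnorm_le:
  assumes f: "finsupp2 f" and C: "0 \<le> C"
    and h: "\<And>\<xi>. finsupp2 \<xi> \<Longrightarrow> l2norm (twprod \<theta> f \<xi>) \<le> C * l2norm \<xi>"
  shows "twnorm \<theta> f \<le> C"
  unfolding twnorm_def
proof (rule cSup_least)
  show "{l2norm (twprod \<theta> f \<xi>) |\<xi>. finsupp2 \<xi> \<and> l2norm \<xi> \<le> 1} \<noteq> {}"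
    using finsupp2_zero by fastforce
  fix x assume "x \<in> {l2norm (twprod \<theta> f \<xi>) |\<xi>. finsupp2 \<xi> \<and> l2norm \<xi> \<le> 1}"
  then obtain \<xi> where x: "x = l2norm (twprod \<theta> f \<xi>)" "finsupp2 \<xi>" "l2norm \<xi> \<le> 1" by blast
  have "x \<le> C * l2norm \<xi>" using h[OF x(2)] x(1) by simp
  also have "\<dots> \<le> C * 1" by (rule mult_left_mono[OF x(3) C])
  finally show "x \<le> C" by simp
qed

lemma twnorm_l1: "finsupp2 f \<Longrightarrow> twnorm \<theta> f \<le> l1 f"
  by (rule twnorm_le[OF _ l1_nonneg]) (auto intro: twprod_l2)

lemma twnorm_add:
  assumes f: "finsupp2 f" and g: "finsupp2 g"
  shows "twnorm \<theta> (\<lambda>k. f k + g k) \<le> twnorm \<theta> f + twnorm \<theta> g"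
proof (rule twnorm_le)
  show "0 \<le> twnorm \<theta> f + twnorm \<theta> g" using twnorm_nonneg[OF f] twnorm_nonneg[OF g] by simp
  fix \<xi> assume x: "finsupp2 \<xi>"
  have "l2norm (twprod \<theta> (\<lambda>k. f k + g k) \<xi>) \<le> l2norm (twprod \<theta> f \<xi>) + l2norm (twprod \<theta> g \<xi>)"
    by (simp add: twprod_add_left[OF f g] l2norm_triangle finsupp2_twprod f g x)
  also have "\<dots> \<le> twnorm \<theta> f * l2norm \<xi> + twnorm \<theta> g * l2norm \<xi>"
    by (intro add_mono twnorm_bound f g x)
  finally show "l2norm (twprod \<theta> (\<lambda>k. f k + g k) \<xi>) \<le> (twnorm \<theta> f + twnorm \<theta> g) * l2norm \<xi>"
    by (simp add: algebra_simps)
qed (use f g in auto)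

lemma twnorm_smul:
  assumes f: "finsupp2 f"
  shows "twnorm \<theta> (\<lambda>k. c * f k) \<le> cmod c * twnorm \<theta> f"
proof (rule twnorm_le)
  show "0 \<le> cmod c * twnorm \<theta> f" using twnorm_nonneg[OF f] by simp
  fix \<xi> assume x: "finsupp2 \<xi>"
  have "l2norm (twprod \<theta> (\<lambda>k. c * f k) \<xi>) = cmod c * l2norm (twprod \<theta> f \<xi>)"
    by (simp add: twprod_smul_left[OF f] l2norm_smul finsupp2_twprod f x)
  also have "\<dots> \<le> cmod c * (twnorm \<theta> f * l2norm \<xi>)"
    by (intro mult_left_mono twnorm_bound f x) simp
  finally show "l2norm (twprod \<theta> (\<lambda>k. c * f k) \<xi>) \<le> cmod c * twnorm \<theta> f * l2norm \<xi>"
    by (simp add: algebra_simps)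
qed (use f in auto)

lemma twnorm_diff:
  assumes f: "finsupp2 f" and g: "finsupp2 g"
  shows "twnorm \<theta> (\<lambda>k. f k - g k) \<le> twnorm \<theta> f + twnorm \<theta> g"
proof -
  have "twnorm \<theta> (\<lambda>k. f k - g k) = twnorm \<theta> (\<lambda>k. f k + (-1) * g k)" by simp
  also have "\<dots> \<le> twnorm \<theta> f + twnorm \<theta> (\<lambda>k. (-1) * g k)" using f g finsupp2_smul[OF g, of "-1"] by (intro twnorm_add) auto
  also have "\<dots> \<le> twnorm \<theta> f + cmod (-1) * twnorm \<theta> g" using twnorm_smul[OF g, of "-1"] by simp
  finally show ?thesis by simp
qed

lemma twnorm_mult:
  assumes f: "finsupp2 f" and g: "finsupp2 g"
  shows "twnorm \<theta> (twprod \<theta> f g) \<le> twnorm \<theta> f * twnorm \<theta> g"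
proof (rule twnorm_le)
  show "0 \<le> twnorm \<theta> f * twnorm \<theta> g" using twnorm_nonneg[OF f] twnorm_nonneg[OF g] by simp
  fix \<xi> assume x: "finsupp2 \<xi>"
  have "l2norm (twprod \<theta> (twprod \<theta> f g) \<xi>) = l2norm (twprod \<theta> f (twprod \<theta> g \<xi>))"
    by (simp add: twprod_assoc[OF f g])
  also have "\<dots> \<le> twnorm \<theta> f * l2norm (twprod \<theta> g \<xi>)" by (intro twnorm_bound f finsupp2_twprod g x)
  also have "\<dots> \<le> twnorm \<theta> f * (twnorm \<theta> g * l2norm \<xi>)"
    by (intro mult_left_mono twnorm_bound g x twnorm_nonneg f)
  finally show "l2norm (twprod \<theta> (twprod \<theta> f g) \<xi>) \<le> twnorm \<theta> f * twnorm \<theta> g * l2norm \<xi>"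
    by (simp add: algebra_simps)
qed (use f g in auto)

end


fun tpow :: "real \<Rightarrow> coeffs \<Rightarrow> nat \<Rightarrow> coeffs" where
  "tpow \<theta> T 0 = twone"
| "tpow \<theta> T (Suc n) = twprod \<theta> T (tpow \<theta> T n)"

fun geo :: "real \<Rightarrow> coeffs \<Rightarrow> nat \<Rightarrow> coeffs" where
  "geo \<theta> T 0 = (\<lambda>k. 0)"
| "geo \<theta> T (Suc n) = (\<lambda>k. geo \<theta> T n k + tpow \<theta> T n k)"

context fixes \<theta> :: real and T :: coeffs assumes T: "finsupp2 T" begin

lemma finsupp2_tpow: "finsupp2 (tpow \<theta> T n)"
  by (induction n) (auto intro: finsupp2_twprod T)

lemma finsupp2_geo: "finsupp2 (geo \<theta> T n)"
  by (induction n) (auto intro: finsupp2_tpow)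

lemma twnorm_twone: "twnorm \<theta> twone \<le> 1"
  by (rule twnorm_le) (auto simp: twprod_one_left)

lemma twnorm_tpow: "twnorm \<theta> (tpow \<theta> T n) \<le> twnorm \<theta> T ^ n"
proof (induction n)
  case 0 then show ?case using twnorm_twone by simp
next
  case (Suc n)
  have "twnorm \<theta> (tpow \<theta> T (Suc n)) \<le> twnorm \<theta> T * twnorm \<theta> (tpow \<theta> T n)"
    by (simp add: twnorm_mult T finsupp2_tpow)
  also have "\<dots> \<le> twnorm \<theta> T * twnorm \<theta> T ^ n"
    by (rule mult_left_mono[OF Suc.IH twnorm_nonneg[OF T]])
  finally show ?case by simp
qed

lemma tpow_right: "twprod \<theta> (tpow \<theta> T n) T = tpow \<theta> T (Suc n)"
proof (induction n)
  case 0 then show ?case by (simp add: twprod_one_left twprod_one_right T)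
next
  case (Suc n)
  have "twprod \<theta> (tpow \<theta> T (Suc n)) T = twprod \<theta> T (twprod \<theta> (tpow \<theta> T n) T)"
    by (simp add: twprod_assoc T finsupp2_tpow)
  then show ?case using Suc.IH by simp
qed

lemma geo_left: "twprod \<theta> T (geo \<theta> T n) = (\<lambda>k. geo \<theta> T (Suc n) k - twone k)"
proof (induction n)
  case 0 then show ?case by (simp add: twprod_zero_right)
next
  case (Suc n)
  have "twprod \<theta> T (geo \<theta> T (Suc n)) = (\<lambda>p. twprod \<theta> T (geo \<theta> T n) p + twprod \<theta> T (tpow \<theta> T n) p)"
    by (simp add: twprod_add_right)
  then show ?case using Suc.IH by (simp add: fun_eq_iff)
qed

lemma geo_right: "twprod \<theta> (geo \<theta> T n) T = (\<lambda>k. geo \<theta> T (Suc n) k - twone k)"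
proof (induction n)
  case 0
  have "twprod \<theta> (\<lambda>k. 0) T = (\<lambda>k. 0)" by (auto simp: twprod_def supp2_def fun_eq_iff)
  then show ?case by simp
next
  case (Suc n)
  have "twprod \<theta> (geo \<theta> T (Suc n)) T = (\<lambda>p. twprod \<theta> (geo \<theta> T n) T p + twprod \<theta> (tpow \<theta> T n) T p)"
    by (simp add: twprod_add_left finsupp2_geo finsupp2_tpow)
  then show ?case using Suc.IH by (simp add: fun_eq_iff tpow_right)
qed

lemma twnorm_geo_diff:
  "twnorm \<theta> (\<lambda>k. geo \<theta> T (j + d) k - geo \<theta> T j k) \<le> (\<Sum>l<d. twnorm \<theta> T ^ (j + l))"
proof (induction d)
  case 0
  have "twnorm \<theta> (\<lambda>k. 0) \<le> 0" by (rule twnorm_le) (auto simp: twprod_def supp2_def case_prod_beta')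
  then show ?case by simp
next
  case (Suc d)
  have "twnorm \<theta> (\<lambda>k. geo \<theta> T (j + Suc d) k - geo \<theta> T j k)
      = twnorm \<theta> (\<lambda>k. (geo \<theta> T (j + d) k - geo \<theta> T j k) + tpow \<theta> T (j + d) k)"
    by (simp add: algebra_simps)
  also have "\<dots> \<le> twnorm \<theta> (\<lambda>k. geo \<theta> T (j + d) k - geo \<theta> T j k) + twnorm \<theta> (tpow \<theta> T (j + d))"
    by (rule twnorm_add) (auto intro: finsupp2_geo finsupp2_tpow)
  also have "\<dots> \<le> (\<Sum>l<d. twnorm \<theta> T ^ (j + l)) + twnorm \<theta> T ^ (j + d)"
    by (intro add_mono Suc.IH twnorm_tpow)
  finally show ?case by simp
qed

lemma neumann_invertible:
  assumes x: "finsupp2 x" and c: "c > 0"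
    and Tdef: "T = (\<lambda>k. twone k - complex_of_real c * x k)"
    and q: "twnorm \<theta> T < 1"
  shows "tw_invertible \<theta> x"
proof -
  let ?q = "twnorm \<theta> T"
  have q0: "0 \<le> ?q" by (rule twnorm_nonneg[OF T])
  define y where "y n = (\<lambda>k. complex_of_real c * geo \<theta> T n k)" for n
  have fy: "finsupp2 (y n)" for n unfolding y_def by (intro finsupp2_smul finsupp2_geo)
  have xe: "x = (\<lambda>k. complex_of_real (1 / c) * (twone k - T k))"
    using c by (auto simp: Tdef fun_eq_iff field_simps)
  have f1: "finsupp2 (\<lambda>k. twone k - T k)" using T by auto
  have left: "twprod \<theta> x (y n) - twone = (\<lambda>k. - tpow \<theta> T n k)" for n
  proof -
    have "twprod \<theta> x (y n) = (\<lambda>p. complex_of_real c * (complex_of_real (1 / c) *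
            (twprod \<theta> twone (geo \<theta> T n) p - twprod \<theta> T (geo \<theta> T n) p)))"
      unfolding y_def twprod_smul_right
      by (subst xe, subst twprod_smul_left[OF f1], subst twprod_diff_left[OF finsupp2_twone T]) simp
    then show ?thesis using c by (simp add: fun_eq_iff twprod_one_left geo_left)
  qed
  have right: "twprod \<theta> (y n) x - twone = (\<lambda>k. - tpow \<theta> T n k)" for n
  proof -
    have "twprod \<theta> (y n) x = (\<lambda>p. complex_of_real (1 / c) * (complex_of_real c *
            (twprod \<theta> (geo \<theta> T n) twone p - twprod \<theta> (geo \<theta> T n) T p)))"
      unfolding y_def twprod_smul_left[OF finsupp2_geo]
      by (subst xe, subst twprod_smul_right, subst twprod_diff_right) simp
    then show ?thesis using c by (simp add: fun_eq_iff twprod_one_right finsupp2_geo geo_right)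
  qed
  have nneg: "twnorm \<theta> (\<lambda>k. - tpow \<theta> T n k) \<le> ?q ^ n" for n
  proof -
    have "twnorm \<theta> (\<lambda>k. (-1) * tpow \<theta> T n k) \<le> cmod (-1) * twnorm \<theta> (tpow \<theta> T n)"
      by (rule twnorm_smul[OF finsupp2_tpow])
    then show ?thesis using twnorm_tpow[of n] by simp
  qed
  have nn0: "0 \<le> twnorm \<theta> (\<lambda>k. - tpow \<theta> T n k)" for n
    by (rule twnorm_nonneg) (use finsupp2_smul[OF finsupp2_tpow, of "-1"] in simp)
  have lim: "(\<lambda>n. twnorm \<theta> (\<lambda>k. - tpow \<theta> T n k)) \<longlonglongrightarrow> 0"
    by (rule tendsto_sandwich[where f="\<lambda>_. 0" and h="\<lambda>n. ?q ^ n"])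
       (use nneg nn0 q q0 in \<open>auto intro: LIMSEQ_power_zero\<close>)
  have cauchy: "\<forall>e>0. \<exists>N. \<forall>i\<ge>N. \<forall>j\<ge>N. twnorm \<theta> (y i - y j) < e"
  proof (intro allI impI)
    fix e :: real assume e: "e > 0"
    have bd: "twnorm \<theta> (y (j + d) - y j) \<le> c * (?q ^ j / (1 - ?q))" for j d
    proof -
      have "y (j + d) - y j = (\<lambda>k. complex_of_real c * (geo \<theta> T (j + d) k - geo \<theta> T j k))"
        by (simp add: y_def fun_eq_iff algebra_simps)
      then have "twnorm \<theta> (y (j + d) - y j) \<le> cmod (complex_of_real c) * twnorm \<theta> (\<lambda>k. geo \<theta> T (j + d) k - geo \<theta> T j k)"
        by (simp only: twnorm_smul finsupp2_diff finsupp2_geo)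
      also have "\<dots> \<le> c * (\<Sum>l<d. ?q ^ (j + l))"
        using c by (simp add: twnorm_geo_diff mult_left_mono)
      also have "(\<Sum>l<d. ?q ^ (j + l)) \<le> ?q ^ j / (1 - ?q)"
      proof -
        have "(\<Sum>l<d. ?q ^ (j + l)) = ?q ^ j * (\<Sum>l<d. ?q ^ l)" by (simp add: power_add sum_distrib_left)
        also have "(\<Sum>l<d. ?q ^ l) \<le> 1 / (1 - ?q)"
          using sum_le_suminf[OF summable_geometric[of ?q], of "{..<d}"] q q0 suminf_geometric[of ?q]
          by (simp add: divide_simps)
        then have "?q ^ j * (\<Sum>l<d. ?q ^ l) \<le> ?q ^ j * (1 / (1 - ?q))" by (rule mult_left_mono) (simp add: q0)
        finally show ?thesis by simp
      qed
      finally show ?thesis using c by (simp add: mult_left_mono)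
    qed
    have "(\<lambda>j. c * (?q ^ j / (1 - ?q))) \<longlonglongrightarrow> c * (0 / (1 - ?q))"
      by (intro tendsto_intros LIMSEQ_power_zero) (use q q0 in auto)
    then have "eventually (\<lambda>j. c * (?q ^ j / (1 - ?q)) < e) sequentially"
      using e by (intro order_tendstoD(2)) auto
    then obtain N where N: "\<And>j. j \<ge> N \<Longrightarrow> c * (?q ^ j / (1 - ?q)) < e"
      unfolding eventually_sequentially by blast
    show "\<exists>N. \<forall>i\<ge>N. \<forall>j\<ge>N. twnorm \<theta> (y i - y j) < e"
    proof (intro exI allI impI)
      fix i j assume ij: "i \<ge> N" "j \<ge> N"
      show "twnorm \<theta> (y i - y j) < e"
      proof (cases "i \<ge> j")
        case True
        then obtain d where "i = j + d" using le_Suc_ex by blast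
        then show ?thesis using bd[of j d] N[OF ij(2)] by simp
      next
        case False
        then obtain d where d: "j = i + d" using le_Suc_ex nat_le_linear by blast
        have "y i - y j = (\<lambda>k. (-1) * (y (i + d) - y i) k)" by (simp add: d fun_eq_iff)
        then have "twnorm \<theta> (y i - y j) \<le> cmod (-1) * twnorm \<theta> (y (i + d) - y i)"
          by (simp only: twnorm_smul finsupp2_minus fy)
        then show ?thesis using bd[of i d] N[OF ij(1)] by simp
      qed
    qed
  qed
  show ?thesis unfolding tw_invertible_def
    by (rule exI[of _ y]) (use fy cauchy lim left right in simp)
qed

end


lemma twstar_eq: "twstar \<theta> f k = cnj (f (- k)) * cis (- 2 * pi * \<theta> * of_int (fst k * snd k))"
  by (cases k) (simp add: twstar_def)

lemma supp2_twstar: "supp2 (twstar \<theta> f) \<subseteq> uminus ` supp2 f"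
proof (rule supp2_subI)
  fix k assume "twstar \<theta> f k \<noteq> 0"
  then have "- k \<in> supp2 f" by (auto simp: twstar_eq supp2_def)
  then show "k \<in> uminus ` supp2 f" by (rule rev_image_eqI) simp
qed

lemma finsupp2_twstar: "finsupp2 f \<Longrightarrow> finsupp2 (twstar \<theta> f)"
  unfolding finsupp2_def by (rule finite_subset[OF supp2_twstar]) auto

context fixes \<theta> :: real begin

lemma twprod_adj:
  assumes f: "finsupp2 f" and x: "finsupp2 \<xi>" and e: "finsupp2 \<eta>"
  shows "ip (twprod \<theta> f \<xi>) \<eta> = ip \<xi> (twprod \<theta> (twstar \<theta> f) \<eta>)"
proof -
  let ?Sf = "supp2 f" and ?Sx = "supp2 \<xi>" and ?Se = "supp2 \<eta>"
  let ?S = "?Se \<union> (\<lambda>(a,b). a + b) ` (?Sf \<times> ?Sx)"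
  have fSf: "finite ?Sf" and fSx: "finite ?Sx" and fSe: "finite ?Se"
    using f x e by (auto simp: finsupp2_def)
  have fS: "finite ?S" using fSf fSx fSe by auto
  have fSm: "finite (uminus ` ?Sf)" using fSf by auto
  have "ip (twprod \<theta> f \<xi>) \<eta> = (\<Sum>p\<in>?S. twprod \<theta> f \<xi> p * cnj (\<eta> p))"
    by (rule ip_eq2[OF finsupp2_twprod[OF f x] fS]) auto
  also have "\<dots> = (\<Sum>p\<in>?S. \<Sum>k\<in>?Sf. f k * \<xi> (p - k) * ph \<theta> k p * cnj (\<eta> p))"
    by (simp add: twprod_eq[OF fSf] sum_distrib_right)
  also have "\<dots> = (\<Sum>k\<in>?Sf. \<Sum>p\<in>?S. f k * \<xi> (p - k) * ph \<theta> k p * cnj (\<eta> p))"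
    by (rule sum.swap)
  also have "\<dots> = (\<Sum>k\<in>?Sf. \<Sum>j\<in>?Sx. f k * \<xi> j * ph \<theta> k (k + j) * cnj (\<eta> (k + j)))"
  proof (rule sum.cong[OF refl])
    fix k assume k: "k \<in> ?Sf"
    show "(\<Sum>p\<in>?S. f k * \<xi> (p - k) * ph \<theta> k p * cnj (\<eta> p)) =
          (\<Sum>j\<in>?Sx. f k * \<xi> j * ph \<theta> k (k + j) * cnj (\<eta> (k + j)))"
    proof (subst sum_shift[OF fS, of k ?Sx])
      show "(+) k ` ?Sx \<subseteq> ?S"
      proof (rule subsetI)
        fix p assume "p \<in> (+) k ` ?Sx"
        then obtain l where l: "l \<in> ?Sx" "p = k + l" by blast
        have "p \<in> (\<lambda>(a,b). a + b) ` (?Sf \<times> ?Sx)" by (rule rev_image_eqI[of "(k, l)"]) (use k l in simp_all)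
        then show "p \<in> ?S" by blast
      qed
    next
      fix j assume nj: "j \<notin> (+) k ` ?Sx"
      have "\<xi> (j - k) = 0"
      proof (rule ccontr)
        assume "\<xi> (j - k) \<noteq> 0"
        then have "j - k \<in> ?Sx" by (simp add: supp2_def)
        then have "j \<in> (+) k ` ?Sx" by (rule rev_image_eqI) simp
        with nj show False by blast
      qed
      then show "f k * \<xi> (j - k) * ph \<theta> k j * cnj (\<eta> j) = 0" by simp
    qed simp
  qed
  also have "\<dots> = (\<Sum>j\<in>?Sx. \<Sum>k\<in>?Sf. \<xi> j * cnj (cnj (f k) * cis (- 2 * pi * \<theta> * of_int (fst k * snd k)) * \<eta> (j + k) * ph \<theta> (- k) j))"
    apply (subst sum.swap)
    apply (intro sum.cong refl)
    apply (simp add: ph_def cis_cnj)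
    apply (simp only: mult.assoc[symmetric] cis_mult[symmetric])
    apply (simp add: mult_ac cis_mult add.commute)
    apply (rule disjI2, rule disjI2, rule disjI2, rule arg_cong[where f=cis])
    apply (simp add: algebra_simps)
    done
  also have "\<dots> = (\<Sum>j\<in>?Sx. \<xi> j * cnj (\<Sum>l\<in>uminus ` ?Sf. twstar \<theta> f l * \<eta> (j - l) * ph \<theta> l j))"
    by (simp add: sum.reindex inj_on_def twstar_eq cnj_sum sum_distrib_left)
  also have "\<dots> = ip \<xi> (twprod \<theta> (twstar \<theta> f) \<eta>)"
    by (simp add: ip_def twprod_eq[OF fSm supp2_twstar])
  finally show ?thesis .
qed

lemma twprod_herm:
  assumes f: "finsupp2 f" and sa: "twstar \<theta> f = f" and x: "finsupp2 \<xi>" and e: "finsupp2 \<eta>"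
  shows "ip (twprod \<theta> f \<xi>) \<eta> = cnj (ip (twprod \<theta> f \<eta>) \<xi>)"
  using twprod_adj[OF f x e] sa ip_cnj[OF finsupp2_twprod[OF f e] x] by simp

end


lemma quad_nonneg_cs:
  fixes a b c :: real
  assumes a: "0 \<le> a" and b: "0 \<le> b" and c: "0 \<le> c"
    and h: "\<And>t. 0 \<le> a + 2 * t * b + t\<^sup>2 * b * c"
  shows "b \<le> a * c"
proof (cases "c = 0")
  case True
  have "b = 0"
  proof (rule ccontr)
    assume "b \<noteq> 0" then have bp: "b > 0" using b by simp
    have "0 \<le> a + 2 * (- (a + 1) / (2 * b)) * b" using h[of "- (a + 1) / (2 * b)"] True by simp
    also have "\<dots> = -1" using bp by (simp add: field_simps)
    finally show False by simp
  qed
  then show ?thesis using True by simp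
next
  case False
  then have cp: "c > 0" using c by simp
  have "0 \<le> a + 2 * (- 1 / c) * b + (- 1 / c)\<^sup>2 * b * c" by (rule h)
  also have "\<dots> = a - b / c" using cp by (simp add: field_simps power2_eq_square)
  finally show ?thesis using cp by (simp add: field_simps)
qed

context fixes \<theta> :: real begin

lemma pos_cs:
  assumes f: "finsupp2 f" and sa: "twstar \<theta> f = f"
    and pos: "\<And>w. finsupp2 w \<Longrightarrow> 0 \<le> Re (ip (twprod \<theta> f w) w)"
    and u: "finsupp2 u" and v: "finsupp2 v"
  shows "(cmod (ip (twprod \<theta> f u) v))\<^sup>2 \<le> Re (ip (twprod \<theta> f u) u) * Re (ip (twprod \<theta> f v) v)"
proof -
  let ?\<beta> = "ip (twprod \<theta> f u) v"
  let ?a = "Re (ip (twprod \<theta> f u) u)" and ?c = "Re (ip (twprod \<theta> f v) v)"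
  have fu: "finsupp2 (twprod \<theta> f u)" and fv: "finsupp2 (twprod \<theta> f v)" using f u v by auto
  have vu: "ip (twprod \<theta> f v) u = cnj ?\<beta>" by (rule twprod_herm[OF f sa v u])
  have key: "0 \<le> ?a + 2 * t * (cmod ?\<beta>)\<^sup>2 + t\<^sup>2 * (cmod ?\<beta>)\<^sup>2 * ?c" for t
  proof -
    define s where "s = complex_of_real t * ?\<beta>"
    define w where "w = (\<lambda>k. u k + s * v k)"
    have fw: "finsupp2 w" unfolding w_def using u v by auto
    have fsv: "finsupp2 (\<lambda>k. s * twprod \<theta> f v k)" using fv by auto
    have e1: "twprod \<theta> f w = (\<lambda>p. twprod \<theta> f u p + s * twprod \<theta> f v p)"
      unfolding w_def twprod_add_right twprod_smul_right ..
    have e2: "ip (twprod \<theta> f w) w = ip (twprod \<theta> f u) u + cnj s * ?\<beta> + s * cnj ?\<beta> + (s * cnj s) * ip (twprod \<theta> f v) v"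
      unfolding e1
      by (simp add: w_def ip_add_left[OF fu fsv] ip_smul_left[OF fv] ip_add_right ip_smul_right vu algebra_simps)
    have nb: "?\<beta> * cnj ?\<beta> = complex_of_real ((cmod ?\<beta>)\<^sup>2)" by (rule complex_norm_square[symmetric])
    have r1: "cnj s * ?\<beta> = complex_of_real (t * (cmod ?\<beta>)\<^sup>2)"
    proof -
      have "cnj s * ?\<beta> = complex_of_real t * (?\<beta> * cnj ?\<beta>)" by (simp add: s_def mult_ac)
      then show ?thesis by (simp add: nb)
    qed
    have r2: "s * cnj ?\<beta> = complex_of_real (t * (cmod ?\<beta>)\<^sup>2)"
    proof -
      have "s * cnj ?\<beta> = complex_of_real t * (?\<beta> * cnj ?\<beta>)" by (simp add: s_def mult_ac)
      then show ?thesis by (simp add: nb)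
    qed
    have r3: "s * cnj s = complex_of_real (t\<^sup>2 * (cmod ?\<beta>)\<^sup>2)"
    proof -
      have "s * cnj s = complex_of_real (t\<^sup>2) * (?\<beta> * cnj ?\<beta>)" by (simp add: s_def mult_ac power2_eq_square)
      then show ?thesis by (simp add: nb)
    qed
    have "Re (ip (twprod \<theta> f w) w) = ?a + 2 * t * (cmod ?\<beta>)\<^sup>2 + t\<^sup>2 * (cmod ?\<beta>)\<^sup>2 * ?c"
      unfolding e2 r1 r2 r3 by simp
    then show ?thesis using pos[OF fw] by simp
  qed
  show ?thesis
    by (rule quad_nonneg_cs) (use pos[OF u] pos[OF v] key in \<open>auto simp: mult.assoc\<close>)
qed

end


lemma l2norm_diff:
  assumes "finsupp2 u" "finsupp2 v" shows "l2norm (\<lambda>k. u k - v k) \<le> l2norm u + l2norm v"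
proof -
  have "l2norm (\<lambda>k. u k - v k) = l2norm (\<lambda>k. u k + (-1) * v k)" by simp
  also have "\<dots> \<le> l2norm u + l2norm (\<lambda>k. (-1) * v k)"
    using assms finsupp2_smul[OF assms(2), of "-1"] by (intro l2norm_triangle) auto
  also have "l2norm (\<lambda>k. (-1) * v k) = l2norm v" using l2norm_smul[OF assms(2), of "-1"] by simp
  finally show ?thesis by simp
qed

lemma cancel_sq: "(x::real)\<^sup>2 * x\<^sup>2 \<le> A * x\<^sup>2 \<Longrightarrow> x\<^sup>2 \<le> A \<or> x = 0"
proof -
  assume h: "x\<^sup>2 * x\<^sup>2 \<le> A * x\<^sup>2"
  show ?thesis
  proof (cases "x = 0")
    case False
    then have p: "x\<^sup>2 > 0" by simp
    then show ?thesis using mult_right_le_imp_le[OF h p] by blast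
  qed simp
qed

lemma l2norm_twone: "l2norm twone = 1"
  by (simp add: l2norm_def supp2_twone twone_eq)

context fixes \<theta> :: real begin

lemma twstar_comb:
  assumes sa: "twstar \<theta> f = f"
  shows "twstar \<theta> (\<lambda>k. complex_of_real c * f k + complex_of_real d * twone k) =
         (\<lambda>k. complex_of_real c * f k + complex_of_real d * twone k)"
proof
  fix k
  have fk: "f k = cnj (f (- k)) * cis (- 2 * pi * \<theta> * of_int (fst k * snd k))"
    using fun_cong[OF sa, of k] by (simp add: twstar_eq)
  show "twstar \<theta> (\<lambda>k. complex_of_real c * f k + complex_of_real d * twone k) k =
        complex_of_real c * f k + complex_of_real d * twone k"
  proof (cases "k = 0")
    case True
    then have "f 0 = cnj (f 0)" using fk by simp
    then show ?thesis using True by (simp add: twstar_eq twone_eq)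
  next
    case False
    then show ?thesis by (simp add: twstar_eq twone_eq fk)
  qed
qed

lemma ip_shifted:
  assumes f: "finsupp2 f" and x: "finsupp2 \<xi>"
  shows "ip (twprod \<theta> (\<lambda>k. complex_of_real c * f k + complex_of_real d * twone k) \<xi>) \<xi>
        = complex_of_real c * ip (twprod \<theta> f \<xi>) \<xi> + complex_of_real (d * (l2norm \<xi>)\<^sup>2)"
proof -
  have "twprod \<theta> (\<lambda>k. complex_of_real c * f k + complex_of_real d * twone k) \<xi>
      = (\<lambda>p. complex_of_real c * twprod \<theta> f \<xi> p + complex_of_real d * \<xi> p)"
    by (simp add: twprod_add_left[OF finsupp2_smul[OF f] finsupp2_smul[OF finsupp2_twone]]
        twprod_smul_left[OF f] twprod_smul_left[OF finsupp2_twone] twprod_one_left)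
  then show ?thesis
    by (simp add: ip_add_left[OF finsupp2_smul[OF finsupp2_twprod[OF f x]] finsupp2_smul[OF x]]
        ip_smul_left[OF finsupp2_twprod[OF f x]] ip_smul_left[OF x] ip_self[OF x] del: of_real_power)
qed

lemma herm_norm_bound:
  assumes S: "finsupp2 S" and sa: "twstar \<theta> S = S"
    and pos: "\<And>w. finsupp2 w \<Longrightarrow> 0 \<le> Re (ip (twprod \<theta> S w) w)"
    and up: "\<And>w. finsupp2 w \<Longrightarrow> Re (ip (twprod \<theta> S w) w) \<le> q * (l2norm w)\<^sup>2"
    and q: "0 \<le> q"
  shows "twnorm \<theta> S \<le> q"
proof (rule twnorm_le[OF S q])
  fix \<xi> assume x: "finsupp2 \<xi>"
  let ?\<eta> = "twprod \<theta> S \<xi>"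
  have e: "finsupp2 ?\<eta>" using S x by auto
  have "(cmod (ip ?\<eta> ?\<eta>))\<^sup>2 \<le> Re (ip ?\<eta> \<xi>) * Re (ip (twprod \<theta> S ?\<eta>) ?\<eta>)"
    by (rule pos_cs[OF S sa pos x e])
  also have "\<dots> \<le> (q * (l2norm \<xi>)\<^sup>2) * (q * (l2norm ?\<eta>)\<^sup>2)"
    by (intro mult_mono up x e pos) (use q in auto)
  moreover have "cmod (ip ?\<eta> ?\<eta>) = (l2norm ?\<eta>)\<^sup>2" by (simp add: ip_self[OF e] del: of_real_power)
  ultimately have "(l2norm ?\<eta>)\<^sup>2 * (l2norm ?\<eta>)\<^sup>2 \<le> (q * l2norm \<xi>)\<^sup>2 * (l2norm ?\<eta>)\<^sup>2"
    by (simp add: power2_eq_square algebra_simps)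
  then have "(l2norm ?\<eta>)\<^sup>2 \<le> (q * l2norm \<xi>)\<^sup>2 \<or> l2norm ?\<eta> = 0"
    by (rule cancel_sq)
  then show "l2norm ?\<eta> \<le> q * l2norm \<xi>"
  proof
    assume "(l2norm ?\<eta>)\<^sup>2 \<le> (q * l2norm \<xi>)\<^sup>2"
    then show ?thesis by (rule power2_le_imp_le) (use q l2norm_nonneg[of \<xi>] in simp)
  qed (use q l2norm_nonneg[of \<xi>] in simp)
qed

lemma pos_approx:
  assumes T: "finsupp2 T" and sa: "twstar \<theta> T = T"
    and pos: "\<And>w. finsupp2 w \<Longrightarrow> 0 \<le> Re (ip (twprod \<theta> T w) w)"
    and x: "finsupp2 \<xi>"
  shows "(l2norm (twprod \<theta> T \<xi>))\<^sup>2 \<le> twnorm \<theta> T * Re (ip (twprod \<theta> T \<xi>) \<xi>)"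
proof -
  let ?\<eta> = "twprod \<theta> T \<xi>"
  have e: "finsupp2 ?\<eta>" using T x by auto
  have up: "Re (ip (twprod \<theta> T ?\<eta>) ?\<eta>) \<le> twnorm \<theta> T * (l2norm ?\<eta>)\<^sup>2"
  proof -
    have "Re (ip (twprod \<theta> T ?\<eta>) ?\<eta>) \<le> cmod (ip (twprod \<theta> T ?\<eta>) ?\<eta>)" by (rule complex_Re_le_cmod)
    also have "\<dots> \<le> l2norm (twprod \<theta> T ?\<eta>) * l2norm ?\<eta>" by (rule ip_cs) (use T e in auto)
    also have "\<dots> \<le> (twnorm \<theta> T * l2norm ?\<eta>) * l2norm ?\<eta>"
      by (intro mult_right_mono twnorm_bound T e l2norm_nonneg)
    finally show ?thesis by (simp add: power2_eq_square mult.assoc)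
  qed
  have "(cmod (ip ?\<eta> ?\<eta>))\<^sup>2 \<le> Re (ip ?\<eta> \<xi>) * Re (ip (twprod \<theta> T ?\<eta>) ?\<eta>)"
    by (rule pos_cs[OF T sa pos x e])
  also have "\<dots> \<le> Re (ip ?\<eta> \<xi>) * (twnorm \<theta> T * (l2norm ?\<eta>)\<^sup>2)"
    by (intro mult_left_mono up pos x)
  moreover have "cmod (ip ?\<eta> ?\<eta>) = (l2norm ?\<eta>)\<^sup>2" by (simp add: ip_self[OF e] del: of_real_power)
  ultimately have "(l2norm ?\<eta>)\<^sup>2 * (l2norm ?\<eta>)\<^sup>2 \<le> (twnorm \<theta> T * Re (ip ?\<eta> \<xi>)) * (l2norm ?\<eta>)\<^sup>2"
    by (simp add: power2_eq_square algebra_simps)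
  then have "(l2norm ?\<eta>)\<^sup>2 \<le> twnorm \<theta> T * Re (ip ?\<eta> \<xi>) \<or> l2norm ?\<eta> = 0"
    by (rule cancel_sq)
  then show ?thesis using twnorm_nonneg[OF T] pos[OF x] by auto
qed

lemma not_invertible_approx:
  assumes T: "finsupp2 T"
    and approx: "\<And>e. e > 0 \<Longrightarrow> \<exists>\<xi>. finsupp2 \<xi> \<and> l2norm \<xi> = 1 \<and> l2norm (twprod \<theta> T \<xi>) < e"
  shows "\<not> tw_invertible \<theta> T"
proof
  assume "tw_invertible \<theta> T"
  then obtain y where fy: "\<And>k. finsupp2 (y k)"
    and lim: "(\<lambda>k. twnorm \<theta> (twprod \<theta> (y k) T - twone)) \<longlonglongrightarrow> 0"
    unfolding tw_invertible_def by blast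
  have "eventually (\<lambda>k. twnorm \<theta> (twprod \<theta> (y k) T - twone) < 1/2) sequentially"
    by (rule order_tendstoD(2)[OF lim]) simp
  then obtain N where "\<And>n. n \<ge> N \<Longrightarrow> twnorm \<theta> (twprod \<theta> (y n) T - twone) < 1/2"
    unfolding eventually_sequentially by blast
  then obtain k where k: "twnorm \<theta> (twprod \<theta> (y k) T - twone) < 1/2" by blast
  let ?Y = "twnorm \<theta> (y k)"
  have Y0: "0 \<le> ?Y" by (rule twnorm_nonneg[OF fy])
  obtain \<xi> where x: "finsupp2 \<xi>" "l2norm \<xi> = 1" "l2norm (twprod \<theta> T \<xi>) < 1 / (2 * (?Y + 1))"
    using approx[of "1 / (2 * (?Y + 1))"] Y0 by auto
  let ?A = "twprod \<theta> (y k) T"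
  have fA: "finsupp2 ?A" using fy T by auto
  have D: "twprod \<theta> (?A - twone) \<xi> = (\<lambda>p. twprod \<theta> (y k) (twprod \<theta> T \<xi>) p - \<xi> p)"
  proof -
    have "?A - twone = (\<lambda>q. ?A q - twone q)" by (simp add: fun_eq_iff)
    then show ?thesis by (simp add: twprod_diff_left[OF fA finsupp2_twone] twprod_one_left twprod_assoc[OF fy T])
  qed
  have xe: "\<xi> = (\<lambda>p. twprod \<theta> (y k) (twprod \<theta> T \<xi>) p - twprod \<theta> (?A - twone) \<xi> p)"
    by (simp add: D)
  have f1: "finsupp2 (twprod \<theta> (y k) (twprod \<theta> T \<xi>))" using fy T x by auto
  have f2: "finsupp2 (twprod \<theta> (?A - twone) \<xi>)" using fA x by auto
  have "l2norm \<xi> \<le> l2norm (twprod \<theta> (y k) (twprod \<theta> T \<xi>)) + l2norm (twprod \<theta> (?A - twone) \<xi>)"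
    by (subst xe) (rule l2norm_diff[OF f1 f2])
  also have "\<dots> \<le> ?Y * l2norm (twprod \<theta> T \<xi>) + twnorm \<theta> (?A - twone) * l2norm \<xi>"
    by (intro add_mono twnorm_bound fy x finsupp2_twprod T finsupp2_minus fA finsupp2_twone)
  also have "\<dots> \<le> ?Y * (1 / (2 * (?Y + 1))) + 1/2 * 1"
    using x k by (intro add_mono mult_left_mono) (auto simp: Y0)
  also have "\<dots> < 1" using Y0 by (simp add: field_simps)
  finally show False using x by simp
qed

end




lemma finsupp2_mult'[intro]: "finsupp2 f \<Longrightarrow> finsupp2 (\<lambda>k. c k * f k)"
  by (rule finsupp2_subI[where S="supp2 f"]) (auto simp: finsupp2_def supp2_def)

lemma ip_zero_left[simp]: "ip (\<lambda>k. 0) v = 0" by (simp add: ip_def supp2_def)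

context fixes \<theta> :: real begin

lemma quad_scale:
  assumes a: "finsupp2 a" and x: "finsupp2 \<xi>"
  shows "Re (ip (twprod \<theta> a (\<lambda>k. complex_of_real r * \<xi> k)) (\<lambda>k. complex_of_real r * \<xi> k))
         = r\<^sup>2 * Re (ip (twprod \<theta> a \<xi>) \<xi>)"
proof -
  have "ip (twprod \<theta> a (\<lambda>k. complex_of_real r * \<xi> k)) (\<lambda>k. complex_of_real r * \<xi> k)
        = complex_of_real (r\<^sup>2) * ip (twprod \<theta> a \<xi>) \<xi>"
    unfolding twprod_smul_right ip_smul_right ip_smul_left[OF finsupp2_twprod[OF a x]]
    by (simp add: power2_eq_square)
  then show ?thesis by simp
qed

lemma spectrum_lower_bound:
  assumes a: "finsupp2 a" and sa: "twstar \<theta> a = a"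
    and spec: "tw_spectrum \<theta> a \<subseteq> complex_of_real ` {0<..}"
  shows "\<exists>m>0. \<forall>\<xi>. finsupp2 \<xi> \<longrightarrow> m * (l2norm \<xi>)\<^sup>2 \<le> Re (ip (twprod \<theta> a \<xi>) \<xi>)"
proof -
  define R where "R = {Re (ip (twprod \<theta> a \<xi>) \<xi>) | \<xi>. finsupp2 \<xi> \<and> l2norm \<xi> = 1}"
  have Rne: "R \<noteq> {}" unfolding R_def using finsupp2_twone l2norm_twone by blast
  have Rbdd: "bdd_below R"
  proof (rule bdd_belowI)
    fix x assume "x \<in> R"
    then obtain \<xi> where x: "x = Re (ip (twprod \<theta> a \<xi>) \<xi>)" "finsupp2 \<xi>" "l2norm \<xi> = 1"
      unfolding R_def by blast
    have "- x \<le> cmod (ip (twprod \<theta> a \<xi>) \<xi>)" using x(1) abs_Re_le_cmod[of "ip (twprod \<theta> a \<xi>) \<xi>"] by linarith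
    also have "\<dots> \<le> l2norm (twprod \<theta> a \<xi>) * l2norm \<xi>" by (rule ip_cs) (use a x in auto)
    also have "\<dots> \<le> l1 a * l2norm \<xi> * l2norm \<xi>"
      by (intro mult_right_mono twprod_l2 a x l2norm_nonneg)
    finally show "- l1 a \<le> x" using x by simp
  qed
  define m0 where "m0 = Inf R"
  have low: "m0 * (l2norm \<xi>)\<^sup>2 \<le> Re (ip (twprod \<theta> a \<xi>) \<xi>)" if x: "finsupp2 \<xi>" for \<xi>
  proof (cases "l2norm \<xi> = 0")
    case True
    then have "\<xi> = (\<lambda>k. 0)" using l2norm_zero_iff[OF x] by simp
    then show ?thesis by (simp add: twprod_zero_right)
  next
    case False
    then have pos: "l2norm \<xi> > 0" using l2norm_nonneg[of \<xi>] by linarith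
    let ?r = "1 / l2norm \<xi>"
    have x1: "finsupp2 (\<lambda>k. complex_of_real ?r * \<xi> k)" by (rule finsupp2_smul[OF x])
    have n1: "l2norm (\<lambda>k. complex_of_real ?r * \<xi> k) = 1"
      by (subst l2norm_smul[OF x]) (use pos in \<open>simp add: norm_divide\<close>)
    have "m0 \<le> Re (ip (twprod \<theta> a (\<lambda>k. complex_of_real ?r * \<xi> k)) (\<lambda>k. complex_of_real ?r * \<xi> k))"
      unfolding m0_def by (rule cInf_lower[OF _ Rbdd]) (use x1 n1 in \<open>auto simp: R_def\<close>)
    also have "\<dots> = ?r\<^sup>2 * Re (ip (twprod \<theta> a \<xi>) \<xi>)" by (rule quad_scale[OF a x])
    finally show ?thesis using pos by (simp add: field_simps power2_eq_square)
  qed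
  define T where "T = (\<lambda>k. complex_of_real 1 * a k + complex_of_real (- m0) * twone k)"
  have fT: "finsupp2 T" unfolding T_def using a by (intro finsupp2_add finsupp2_smul finsupp2_twone)
  have saT: "twstar \<theta> T = T" unfolding T_def by (rule twstar_comb[OF sa])
  have qT: "Re (ip (twprod \<theta> T \<xi>) \<xi>) = Re (ip (twprod \<theta> a \<xi>) \<xi>) - m0 * (l2norm \<xi>)\<^sup>2"
    if x: "finsupp2 \<xi>" for \<xi>
    unfolding T_def ip_shifted[OF a x] by simp
  have posT: "0 \<le> Re (ip (twprod \<theta> T \<xi>) \<xi>)" if x: "finsupp2 \<xi>" for \<xi>
    using low[OF x] qT[OF x] by simp
  have approx: "\<exists>\<xi>. finsupp2 \<xi> \<and> l2norm \<xi> = 1 \<and> l2norm (twprod \<theta> T \<xi>) < e" if e: "e > 0" for e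
  proof -
    let ?N = "twnorm \<theta> T"
    have N0: "0 \<le> ?N" by (rule twnorm_nonneg[OF fT])
    let ?d = "e\<^sup>2 / (?N + 1)"
    have dpos: "?d > 0" using e N0 by simp
    have "Inf R < m0 + ?d" using dpos by (simp add: m0_def)
    then obtain x where "x \<in> R" "x < m0 + ?d" using cInf_lessD[OF Rne] by blast
    then obtain \<xi> where x: "finsupp2 \<xi>" "l2norm \<xi> = 1" "Re (ip (twprod \<theta> a \<xi>) \<xi>) < m0 + ?d"
      unfolding R_def by blast
    have "(l2norm (twprod \<theta> T \<xi>))\<^sup>2 \<le> ?N * Re (ip (twprod \<theta> T \<xi>) \<xi>)"
      by (rule pos_approx[OF fT saT posT x(1)])
    also have "\<dots> \<le> ?N * ?d" using qT[OF x(1)] x N0 by (intro mult_left_mono) auto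
    also have "\<dots> < e\<^sup>2" using N0 e by (simp add: field_simps)
    finally have "(l2norm (twprod \<theta> T \<xi>))\<^sup>2 < e\<^sup>2" .
    then have "l2norm (twprod \<theta> T \<xi>) < e" using e by (simp add: power_less_imp_less_base)
    then show ?thesis using x by blast
  qed
  have "\<not> tw_invertible \<theta> T" by (rule not_invertible_approx[OF fT approx])
  moreover have "T = a - (\<lambda>k. complex_of_real m0 * twone k)" by (simp add: T_def fun_eq_iff)
  ultimately have "complex_of_real m0 \<in> tw_spectrum \<theta> a" by (simp add: tw_spectrum_def)
  then have "m0 > 0" using spec by auto
  then show ?thesis using low by blast
qed

end

context fixes \<theta> :: real begin

lemma quadform_eq:
  assumes a: "finsupp2 a" and x: "finsupp2 \<xi>"
  shows "ip (twprod \<theta> (\<lambda>k. a k * c k) \<xi>) \<xi> =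
    (\<Sum>p\<in>supp2 \<xi>. \<Sum>k\<in>supp2 a. a k * c k * \<xi> (p - k) * ph \<theta> k p * cnj (\<xi> p))"
proof -
  have fa: "finite (supp2 a)" using a by (simp add: finsupp2_def)
  have s: "supp2 (\<lambda>k. a k * c k) \<subseteq> supp2 a" by (auto simp: supp2_def)
  have fx: "finite (supp2 \<xi>)" using x by (simp add: finsupp2_def)
  show ?thesis
    by (simp add: ip_eq2[OF finsupp2_twprod[OF finsupp2_mult[OF a] x] fx order_refl]
        twprod_eq[OF fa s] sum_distrib_right)
qed

lemma multiplier_identity:
  fixes h :: "int \<times> int \<Rightarrow> real" and B :: "(int \<times> int) set"
  assumes a: "finsupp2 a" and x: "finsupp2 \<xi>" and fB: "finite B"
    and hB: "\<And>v. v \<notin> B \<Longrightarrow> h v = 0"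
  defines "U \<equiv> (\<lambda>(p, v). p + v) ` (supp2 \<xi> \<times> B)"
  shows "(\<Sum>u\<in>U. ip (twprod \<theta> a (\<lambda>p. complex_of_real (h (u - p)) * \<xi> p)) (\<lambda>p. complex_of_real (h (u - p)) * \<xi> p))
       = ip (twprod \<theta> (\<lambda>k. a k * complex_of_real (\<Sum>v\<in>B. h (v + k) * h v)) \<xi>) \<xi>"
proof -
  let ?Sa = "supp2 a" and ?Sx = "supp2 \<xi>"
  have fa: "finite ?Sa" using a by (simp add: finsupp2_def)
  have fx: "finite ?Sx" using x by (simp add: finsupp2_def)
  have fU: "finite U" unfolding U_def using fx fB by auto
  define \<eta> where "\<eta> u = (\<lambda>p. complex_of_real (h (u - p)) * \<xi> p)" for u
  have fe: "finsupp2 (\<eta> u)" for u unfolding \<eta>_def using x by (rule finsupp2_mult')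
  have se: "supp2 (\<eta> u) \<subseteq> ?Sx" for u by (auto simp: \<eta>_def supp2_def)
  have e1: "ip (twprod \<theta> a (\<eta> u)) (\<eta> u) =
     (\<Sum>p\<in>?Sx. \<Sum>k\<in>?Sa. a k * \<xi> (p - k) * ph \<theta> k p * cnj (\<xi> p) *
        complex_of_real (h (u - p + k) * h (u - p)))" for u
    unfolding ip_eq2[OF finsupp2_twprod[OF a fe] fx se] twprod_eq[OF fa order_refl]
    apply (rule sum.cong[OF refl])
    apply (simp only: sum_distrib_right)
    apply (rule sum.cong[OF refl])
    apply (simp add: \<eta>_def algebra_simps)
    done
  have inner: "(\<Sum>u\<in>U. h (u - p + k) * h (u - p)) = (\<Sum>v\<in>B. h (v + k) * h v)" if p: "p \<in> ?Sx" for p k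
  proof (subst sum_shift[OF fU, of p B])
    show "(+) p ` B \<subseteq> U" unfolding U_def
    proof (rule subsetI)
      fix z assume "z \<in> (+) p ` B"
      then obtain v where v: "v \<in> B" "z = p + v" by blast
      show "z \<in> (\<lambda>(p, v). p + v) ` (?Sx \<times> B)" by (rule rev_image_eqI[of "(p, v)"]) (use p v in simp_all)
    qed
  next
    fix u assume nu: "u \<notin> (+) p ` B"
    have "u - p \<notin> B"
    proof
      assume "u - p \<in> B"
      then have "u \<in> (+) p ` B" by (rule rev_image_eqI) simp
      with nu show False by blast
    qed
    then show "h (u - p + k) * h (u - p) = 0" using hB by simp
  qed (simp add: algebra_simps)
  have "(\<Sum>u\<in>U. ip (twprod \<theta> a (\<eta> u)) (\<eta> u)) =
     (\<Sum>p\<in>?Sx. \<Sum>k\<in>?Sa. a k * \<xi> (p - k) * ph \<theta> k p * cnj (\<xi> p) *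
        complex_of_real (\<Sum>u\<in>U. h (u - p + k) * h (u - p)))"
    by (simp add: e1 sum.swap[of _ U] sum_distrib_left)
  also have "\<dots> = (\<Sum>p\<in>?Sx. \<Sum>k\<in>?Sa. a k * \<xi> (p - k) * ph \<theta> k p * cnj (\<xi> p) *
        complex_of_real (\<Sum>v\<in>B. h (v + k) * h v))"
    by (intro sum.cong refl) (simp add: inner)
  also have "\<dots> = ip (twprod \<theta> (\<lambda>k. a k * complex_of_real (\<Sum>v\<in>B. h (v + k) * h v)) \<xi>) \<xi>"
    by (simp add: quadform_eq[OF a x] mult_ac)
  finally show ?thesis by (simp add: \<eta>_def)
qed

end


context fixes \<theta> :: real begin

lemma multiplier_pos:
  fixes h :: "int \<times> int \<Rightarrow> real" and B :: "(int \<times> int) set"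
  assumes a: "finsupp2 a" and x: "finsupp2 \<xi>" and fB: "finite B"
    and hB: "\<And>v. v \<notin> B \<Longrightarrow> h v = 0"
    and lb: "\<And>\<eta>. finsupp2 \<eta> \<Longrightarrow> m * (l2norm \<eta>)\<^sup>2 \<le> Re (ip (twprod \<theta> a \<eta>) \<eta>)"
  shows "m * (\<Sum>v\<in>B. h v * h v) * (l2norm \<xi>)\<^sup>2 \<le>
         Re (ip (twprod \<theta> (\<lambda>k. a k * complex_of_real (\<Sum>v\<in>B. h (v + k) * h v)) \<xi>) \<xi>)"
proof -
  define U where "U = (\<lambda>(p, v). p + v) ` (supp2 \<xi> \<times> B)"
  have fU: "finite U" unfolding U_def using x fB by (auto simp: finsupp2_def)
  define \<eta> where "\<eta> u = (\<lambda>p. complex_of_real (h (u - p)) * \<xi> p)" for u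
  have fe: "finsupp2 (\<eta> u)" for u unfolding \<eta>_def using x by (rule finsupp2_mult')
  have id1: "(\<Sum>u\<in>U. ip (twprod \<theta> a (\<eta> u)) (\<eta> u)) =
        ip (twprod \<theta> (\<lambda>k. a k * complex_of_real (\<Sum>v\<in>B. h (v + k) * h v)) \<xi>) \<xi>"
    unfolding \<eta>_def U_def by (rule multiplier_identity[OF a x fB hB])
  have id2: "(\<Sum>u\<in>U. ip (twprod \<theta> twone (\<eta> u)) (\<eta> u)) =
        ip (twprod \<theta> (\<lambda>k. twone k * complex_of_real (\<Sum>v\<in>B. h (v + k) * h v)) \<xi>) \<xi>"
    unfolding \<eta>_def U_def by (rule multiplier_identity[OF finsupp2_twone x fB hB])
  have one: "(\<lambda>k. twone k * complex_of_real (\<Sum>v\<in>B. h (v + k) * h v)) =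
             (\<lambda>k. complex_of_real (\<Sum>v\<in>B. h v * h v) * twone k)"
    by (auto simp: twone_eq fun_eq_iff)
  have id3: "(\<Sum>u\<in>U. (l2norm (\<eta> u))\<^sup>2) = (\<Sum>v\<in>B. h v * h v) * (l2norm \<xi>)\<^sup>2"
  proof -
    have "complex_of_real (\<Sum>u\<in>U. (l2norm (\<eta> u))\<^sup>2) = (\<Sum>u\<in>U. ip (twprod \<theta> twone (\<eta> u)) (\<eta> u))"
      by (simp add: twprod_one_left ip_self[OF fe] del: of_real_power)
    also have "\<dots> = complex_of_real ((\<Sum>v\<in>B. h v * h v) * (l2norm \<xi>)\<^sup>2)"
      unfolding id2 unfolding one twprod_smul_left[OF finsupp2_twone] twprod_one_left
      by (simp add: ip_smul_left[OF x] ip_self[OF x] del: of_real_power)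
    finally show ?thesis by (simp only: of_real_eq_iff)
  qed
  have "m * (\<Sum>v\<in>B. h v * h v) * (l2norm \<xi>)\<^sup>2 = (\<Sum>u\<in>U. m * (l2norm (\<eta> u))\<^sup>2)"
    by (simp only: sum_distrib_left[symmetric] id3 mult.assoc)
  also have "\<dots> \<le> (\<Sum>u\<in>U. Re (ip (twprod \<theta> a (\<eta> u)) (\<eta> u)))"
    by (rule sum_mono) (rule lb[OF fe])
  also have "\<dots> = Re (ip (twprod \<theta> (\<lambda>k. a k * complex_of_real (\<Sum>v\<in>B. h (v + k) * h v)) \<xi>) \<xi>)"
    unfolding id1[symmetric] by (simp only: Re_sum)
  finally show ?thesis .
qed

end


definition h1 :: "real \<Rightarrow> nat \<Rightarrow> int \<Rightarrow> real" where
  "h1 r L x = (if 0 \<le> x \<and> x < int L then r ^ nat x else 0)"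

definition GG :: "real \<Rightarrow> nat \<Rightarrow> int \<Rightarrow> real" where
  "GG r L c = (\<Sum>i\<in>{0..<int L}. h1 r L (i + c) * h1 r L i)"

definition SS :: "real \<Rightarrow> nat \<Rightarrow> real" where
  "SS r m = (\<Sum>i<m. (r\<^sup>2) ^ i)"

lemma GG_nat: "GG r L c = (\<Sum>i<L. h1 r L (int i + c) * r ^ i)"
proof -
  have "{0..<int L} = int ` {0..<L}" by (simp add: image_int_atLeastLessThan)
  then have "GG r L c = (\<Sum>i\<in>{0..<L}. h1 r L (int i + c) * h1 r L (int i))"
    unfolding GG_def by (simp add: sum.reindex)
  also have "\<dots> = (\<Sum>i<L. h1 r L (int i + c) * r ^ i)"
    by (intro sum.cong) (auto simp: h1_def)
  finally show ?thesis .
qed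

lemma GG_formula: "GG r L c = r ^ nat \<bar>c\<bar> * SS r (L - nat \<bar>c\<bar>)"
proof (cases "c \<ge> 0")
  case True
  define n where "n = nat c"
  have c: "c = int n" using True by (simp add: n_def)
  have "GG r L c = (\<Sum>i<L. if i + n < L then r ^ n * (r\<^sup>2) ^ i else 0)"
    unfolding GG_nat c
    by (intro sum.cong refl) (auto simp: h1_def nat_add_distrib power_add power_mult[symmetric] mult_ac
        simp flip: power_mult_distrib power2_eq_square)
  also have "\<dots> = (\<Sum>i\<in>{i \<in> {..<L}. i + n < L}. r ^ n * (r\<^sup>2) ^ i)"
    by (rule sum.inter_filter[symmetric]) simp
  also have "{i \<in> {..<L}. i + n < L} = {..<L - n}" by auto
  finally show ?thesis by (simp add: c SS_def sum_distrib_left)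
next
  case False
  define n where "n = nat (- c)"
  have c: "c = - int n" using False by (simp add: n_def)
  have "GG r L c = (\<Sum>i<L. if n \<le> i then r ^ n * (r\<^sup>2) ^ (i - n) else 0)"
    unfolding GG_nat c
  proof (intro sum.cong refl)
    fix i assume i: "i \<in> {..<L}"
    show "h1 r L (int i + - int n) * r ^ i = (if n \<le> i then r ^ n * (r\<^sup>2) ^ (i - n) else 0)"
    proof (cases "n \<le> i")
      case True
      then have e: "i = (i - n) + n" by simp
      have "nat (int i + - int n) = i - n" using True by simp
      then have "h1 r L (int i + - int n) = r ^ (i - n)" using True i by (simp add: h1_def)
      moreover have "r ^ (i - n) * r ^ i = r ^ n * (r\<^sup>2) ^ (i - n)"
        by (subst (2) e) (simp add: power_add power_mult[symmetric] power2_eq_square mult_ac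
            flip: power_mult_distrib)
      ultimately show ?thesis using True by simp
    qed (simp add: h1_def)
  qed
  also have "\<dots> = (\<Sum>i\<in>{i \<in> {..<L}. n \<le> i}. r ^ n * (r\<^sup>2) ^ (i - n))"
    by (rule sum.inter_filter[symmetric]) simp
  also have "{i \<in> {..<L}. n \<le> i} = {0 + n..<(L - n) + n}" by auto
  also have "(\<Sum>i\<in>{0 + n..<(L - n) + n}. r ^ n * (r\<^sup>2) ^ (i - n)) = (\<Sum>i\<in>{0..<L - n}. r ^ n * (r\<^sup>2) ^ i)"
    by (subst sum.shift_bounds_nat_ivl) simp
  finally show ?thesis by (simp add: c SS_def sum_distrib_left atLeast0LessThan)
qed

lemma SS_ge1: "L \<ge> 1 \<Longrightarrow> SS r L \<ge> 1"
proof -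
  assume L: "L \<ge> 1"
  have "SS r L = 1 + (\<Sum>i\<in>{1..<L}. (r\<^sup>2) ^ i)"
    unfolding SS_def using L by (simp add: lessThan_atLeast0 sum.atLeast_Suc_lessThan)
  moreover have "0 \<le> (\<Sum>i\<in>{1..<L}. (r\<^sup>2) ^ i)" by (simp add: sum_nonneg)
  ultimately show ?thesis by simp
qed

lemma sq_lt1: "0 \<le> (r::real) \<Longrightarrow> r < 1 \<Longrightarrow> r\<^sup>2 < 1"
proof -
  assume r: "0 \<le> r" "r < 1"
  have "r * r \<le> 1 * r" by (rule mult_right_mono) (use r in auto)
  then show ?thesis using r by (simp add: power2_eq_square)
qed

lemma SS_lim: "0 \<le> r \<Longrightarrow> r < 1 \<Longrightarrow> (\<lambda>L. SS r L) \<longlonglongrightarrow> 1 / (1 - r\<^sup>2)"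
proof -
  assume r: "0 \<le> r" "r < 1"
  have "norm (r\<^sup>2) < 1" using sq_lt1[OF r] by simp
  then have "(\<lambda>i. (r\<^sup>2) ^ i) sums (1 / (1 - r\<^sup>2))" by (rule geometric_sums)
  then show ?thesis unfolding sums_def SS_def by simp
qed

lemma ratio_lim:
  assumes r: "0 \<le> r" "r < 1"
  shows "(\<lambda>L. GG r L c / GG r L 0) \<longlonglongrightarrow> r ^ nat \<bar>c\<bar>"
proof -
  let ?n = "nat \<bar>c\<bar>" and ?s = "1 / (1 - r\<^sup>2)"
  have s0: "?s \<noteq> 0" using sq_lt1[OF r] by simp
  have "(\<lambda>L. r ^ ?n * (SS r L / SS r (L + ?n))) \<longlonglongrightarrow> r ^ ?n * (?s / ?s)"
    by (intro tendsto_intros SS_lim[OF r] LIMSEQ_ignore_initial_segment[OF SS_lim[OF r]] s0)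
  then have "(\<lambda>L. GG r (L + ?n) c / GG r (L + ?n) 0) \<longlonglongrightarrow> r ^ ?n"
    using s0 by (simp add: GG_formula)
  then show ?thesis by (rule LIMSEQ_offset)
qed



lemma Pr_real_eq:
  assumes a0: "a (0, 0) = 1"
  shows "P_r a (complex_of_real r) = (\<lambda>k. a k * complex_of_real (r ^ nat \<bar>fst k\<bar> * r ^ nat \<bar>snd k\<bar>))"
proof
  fix k :: "int \<times> int"
  obtain m n where k: "k = (m, n)" by (cases k)
  show "P_r a (complex_of_real r) k = a k * complex_of_real (r ^ nat \<bar>fst k\<bar> * r ^ nat \<bar>snd k\<bar>)"
    using a0 by (auto simp: P_r_def k power_add)
qed

context fixes \<theta> :: real begin

lemma Pr_pos:
  assumes a: "finsupp2 a" and a0: "a (0, 0) = 1"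
    and lb: "\<And>\<eta>. finsupp2 \<eta> \<Longrightarrow> m * (l2norm \<eta>)\<^sup>2 \<le> Re (ip (twprod \<theta> a \<eta>) \<eta>)"
    and r: "0 \<le> r" "r < 1" and x: "finsupp2 \<xi>"
  shows "m * (l2norm \<xi>)\<^sup>2 \<le> Re (ip (twprod \<theta> (P_r a (complex_of_real r)) \<xi>) \<xi>)"
proof -
  define Q where "Q c = Re (\<Sum>p\<in>supp2 \<xi>. \<Sum>k\<in>supp2 a.
      a k * complex_of_real (c k) * \<xi> (p - k) * ph \<theta> k p * cnj (\<xi> p))" for c :: "int \<times> int \<Rightarrow> real"
  have Qeq: "Re (ip (twprod \<theta> (\<lambda>k. a k * complex_of_real (c k)) \<xi>) \<xi>) = Q c" for c
    unfolding Q_def by (simp only: quadform_eq[OF a x])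
  have Qscale: "Q (\<lambda>k. s * c k) = s * Q c" for s c
    unfolding Q_def by (simp add: sum_distrib_left mult_ac)
  define w where "w k = r ^ nat \<bar>fst k\<bar> * r ^ nat \<bar>snd k\<bar>" for k :: "int \<times> int"
  define \<psi> where "\<psi> L k = GG r L (fst k) / GG r L 0 * (GG r L (snd k) / GG r L 0)" for L and k :: "int \<times> int"
  have bound: "m * (l2norm \<xi>)\<^sup>2 \<le> Q (\<psi> L)" if L: "L \<ge> 1" for L
  proof -
    define hh where "hh v = h1 r L (fst v) * h1 r L (snd v)" for v :: "int \<times> int"
    define BB where "BB = {0..<int L} \<times> {0..<int L}"
    have fBB: "finite BB" by (simp add: BB_def)
    have hB: "hh v = 0" if "v \<notin> BB" for v
    proof -
      obtain i j where v: "v = (i, j)" by (cases v)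
      show ?thesis using that unfolding v hh_def BB_def h1_def by auto
    qed
    have phi: "(\<Sum>v\<in>BB. hh (v + k) * hh v) = GG r L (fst k) * GG r L (snd k)" for k
      by (simp add: BB_def hh_def GG_def sum_product sum.cartesian_product split_def mult_ac)
    have phi0: "(\<Sum>v\<in>BB. hh v * hh v) = GG r L 0 * GG r L 0"
      using phi[of 0] by simp
    have G0: "GG r L 0 \<ge> 1" using SS_ge1[OF L, of r] by (simp add: GG_formula)
    have "m * (GG r L 0 * GG r L 0) * (l2norm \<xi>)\<^sup>2 \<le>
          Re (ip (twprod \<theta> (\<lambda>k. a k * complex_of_real (\<Sum>v\<in>BB. hh (v + k) * hh v)) \<xi>) \<xi>)"
      using multiplier_pos[where h=hh and B=BB and \<theta>=\<theta>, OF a x fBB hB lb] phi0 by simp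
    also have "\<dots> = Q (\<lambda>k. GG r L 0 * GG r L 0 * \<psi> L k)"
      unfolding Qeq phi using G0 by (simp add: \<psi>_def field_simps)
    also have "\<dots> = GG r L 0 * GG r L 0 * Q (\<psi> L)" by (rule Qscale)
    finally have "(GG r L 0 * GG r L 0) * (m * (l2norm \<xi>)\<^sup>2) \<le> (GG r L 0 * GG r L 0) * Q (\<psi> L)"
      by (simp add: mult_ac)
    moreover have "GG r L 0 * GG r L 0 > 0" using G0 by simp
    ultimately show ?thesis by (rule mult_left_le_imp_le)
  qed
  have lim\<psi>: "(\<lambda>L. \<psi> L k) \<longlonglongrightarrow> w k" for k
    unfolding \<psi>_def w_def by (intro tendsto_mult ratio_lim r)
  have "(\<lambda>L. Q (\<psi> L)) \<longlonglongrightarrow> Q w"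
    unfolding Q_def by (intro tendsto_intros lim\<psi>)
  then have "m * (l2norm \<xi>)\<^sup>2 \<le> Q w"
    by (rule LIMSEQ_le_const) (use bound in blast)
  also have "Q w = Re (ip (twprod \<theta> (P_r a (complex_of_real r)) \<xi>) \<xi>)"
    unfolding Pr_real_eq[where a=a, OF a0] Qeq[symmetric] w_def ..
  finally show ?thesis .
qed

end




context fixes \<theta> :: real begin

lemma key_inv:
  assumes P0: "finsupp2 P0" and sa: "twstar \<theta> P0 = P0"
    and lb: "\<And>\<xi>. finsupp2 \<xi> \<Longrightarrow> m * (l2norm \<xi>)\<^sup>2 \<le> Re (ip (twprod \<theta> P0 \<xi>) \<xi>)"
    and ub: "\<And>\<xi>. finsupp2 \<xi> \<Longrightarrow> Re (ip (twprod \<theta> P0 \<xi>) \<xi>) \<le> M * (l2norm \<xi>)\<^sup>2"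
    and m: "0 < m" "m \<le> M" and t: "0 \<le> t"
    and e: "finsupp2 e" "twnorm \<theta> e \<le> m / 2"
    and xdef: "x = (\<lambda>k. P0 k + e k + complex_of_real t * twone k)"
  shows "tw_invertible \<theta> x"
proof -
  define c where "c = 1 / (M + t)"
  have Mt: "M + t > 0" using m t by simp
  have c: "c > 0" using Mt by (simp add: c_def)
  define S where "S = (\<lambda>k. complex_of_real (- c) * P0 k + complex_of_real (1 - c * t) * twone k)"
  have fS: "finsupp2 S" unfolding S_def using P0 by (intro finsupp2_add finsupp2_smul finsupp2_twone)
  have saS: "twstar \<theta> S = S" unfolding S_def by (rule twstar_comb[OF sa])
  have qS: "Re (ip (twprod \<theta> S \<xi>) \<xi>) = - c * Re (ip (twprod \<theta> P0 \<xi>) \<xi>) + (1 - c * t) * (l2norm \<xi>)\<^sup>2"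
    if x: "finsupp2 \<xi>" for \<xi>
    unfolding S_def ip_shifted[OF P0 x] by simp
  have posS: "0 \<le> Re (ip (twprod \<theta> S \<xi>) \<xi>)" if x: "finsupp2 \<xi>" for \<xi>
  proof -
    have "c * Re (ip (twprod \<theta> P0 \<xi>) \<xi>) \<le> c * (M * (l2norm \<xi>)\<^sup>2)"
      by (rule mult_left_mono[OF ub[OF x]]) (use c in simp)
    moreover have "c * (M + t) = 1" using Mt by (simp add: c_def)
    then have "c * (M * (l2norm \<xi>)\<^sup>2) + c * t * (l2norm \<xi>)\<^sup>2 = (l2norm \<xi>)\<^sup>2"
      by (metis distrib_left mult.assoc mult_1 distrib_right)
    ultimately show ?thesis unfolding qS[OF x] by (simp add: algebra_simps)
  qed
  let ?q = "1 - c * (m + t)"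
  have q0: "0 \<le> ?q"
  proof -
    have "c * (m + t) \<le> c * (M + t)" using m c by (intro mult_left_mono) auto
    also have "\<dots> = 1" using Mt by (simp add: c_def)
    finally show ?thesis by simp
  qed
  have upS: "Re (ip (twprod \<theta> S \<xi>) \<xi>) \<le> ?q * (l2norm \<xi>)\<^sup>2" if x: "finsupp2 \<xi>" for \<xi>
  proof -
    have "c * (m * (l2norm \<xi>)\<^sup>2) \<le> c * Re (ip (twprod \<theta> P0 \<xi>) \<xi>)"
      by (rule mult_left_mono[OF lb[OF x]]) (use c in simp)
    then show ?thesis unfolding qS[OF x] by (simp add: algebra_simps)
  qed
  have nS: "twnorm \<theta> S \<le> ?q" by (rule herm_norm_bound[OF fS saS posS upS q0])
  define T where "T = (\<lambda>k. twone k - complex_of_real c * x k)"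
  have Teq: "T = (\<lambda>k. S k - complex_of_real c * e k)"
    by (simp add: T_def S_def xdef fun_eq_iff algebra_simps)
  have fx: "finsupp2 x" unfolding xdef using P0 e by (intro finsupp2_add finsupp2_smul finsupp2_twone)
  have fT: "finsupp2 T" unfolding Teq using fS e by (intro finsupp2_diff finsupp2_smul)
  have "twnorm \<theta> T \<le> twnorm \<theta> S + twnorm \<theta> (\<lambda>k. complex_of_real c * e k)"
    unfolding Teq by (rule twnorm_diff[OF fS finsupp2_smul[OF e(1)]])
  also have "\<dots> \<le> ?q + cmod (complex_of_real c) * twnorm \<theta> e"
    by (intro add_mono nS twnorm_smul e(1))
  also have "\<dots> \<le> ?q + c * (m / 2)" using c e(2) by (simp add: mult_left_mono)
  also have "\<dots> < 1"
  proof -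
    have cm: "0 < c * m" "0 \<le> c * t" using c m t by auto
    show ?thesis by (simp add: algebra_simps) (use cm in linarith)
  qed
  finally have "twnorm \<theta> T < 1" .
  show ?thesis by (rule neumann_invertible[OF fT fx c T_def \<open>twnorm \<theta> T < 1\<close>])
qed

end

context fixes \<theta> :: real begin

lemma Pr_eq: "P_r a r k = (if k = 0 then 1 else a k * r ^ (nat \<bar>fst k\<bar> + nat \<bar>snd k\<bar>))"
  by (cases k) (simp add: P_r_def zero_prod_def)

lemma finsupp2_Pr: "finsupp2 a \<Longrightarrow> finsupp2 (P_r a r)"
  by (rule finsupp2_subI[where S="insert 0 (supp2 a)"]) (auto simp: finsupp2_def supp2_def Pr_eq split: if_splits)

lemma Pr_sa:
  assumes sa: "twstar \<theta> a = a" and a0: "a (0, 0) = 1"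
  shows "twstar \<theta> (P_r a (complex_of_real r)) = P_r a (complex_of_real r)"
proof
  fix k :: "int \<times> int"
  have fk: "a k = cnj (a (- k)) * cis (- 2 * pi * \<theta> * of_int (fst k * snd k))"
    using fun_cong[OF sa, of k] by (simp add: twstar_eq)
  have w: "r ^ nat \<bar>fst (- k)\<bar> * r ^ nat \<bar>snd (- k)\<bar> = r ^ nat \<bar>fst k\<bar> * r ^ nat \<bar>snd k\<bar>" by simp
  show "twstar \<theta> (P_r a (complex_of_real r)) k = P_r a (complex_of_real r) k"
    unfolding Pr_real_eq[where a=a, OF a0] twstar_eq
    by (simp add: fk mult_ac)
qed

lemma Pr_ub:
  assumes a: "finsupp2 a" and a0: "a (0, 0) = 1" and r: "0 \<le> r" "r \<le> 1" and x: "finsupp2 \<xi>"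
  shows "Re (ip (twprod \<theta> (P_r a (complex_of_real r)) \<xi>) \<xi>) \<le> l1 a * (l2norm \<xi>)\<^sup>2"
proof -
  let ?P = "P_r a (complex_of_real r)"
  have fP: "finsupp2 ?P" by (rule finsupp2_Pr[OF a])
  have fa: "finite (supp2 a)" using a by (simp add: finsupp2_def)
  have l1P: "l1 ?P \<le> l1 a"
  proof -
    have s: "supp2 ?P \<subseteq> supp2 a" using a0 by (auto simp: supp2_def Pr_eq zero_prod_def split: if_splits)
    have "l1 ?P = (\<Sum>k\<in>supp2 a. cmod (?P k))" by (rule l1_eq[OF fa s])
    also have "\<dots> \<le> (\<Sum>k\<in>supp2 a. cmod (a k))"
    proof (rule sum_mono)
      fix k
      have "r ^ nat \<bar>fst k\<bar> * r ^ nat \<bar>snd k\<bar> \<le> 1 * 1"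
        using r by (intro mult_mono power_le_one) auto
      moreover have "0 \<le> r ^ nat \<bar>fst k\<bar> * r ^ nat \<bar>snd k\<bar>" using r by simp
      ultimately have "cmod (a k) * (r ^ nat \<bar>fst k\<bar> * r ^ nat \<bar>snd k\<bar>) \<le> cmod (a k)"
        by (intro mult_left_le) auto
      moreover have "cmod (?P k) = cmod (a k) * (r ^ nat \<bar>fst k\<bar> * r ^ nat \<bar>snd k\<bar>)"
        unfolding Pr_real_eq[where a=a, OF a0] using r by (simp add: norm_mult norm_power)
      ultimately show "cmod (?P k) \<le> cmod (a k)" by simp
    qed
    finally show ?thesis by (simp add: l1_def)
  qed
  have "Re (ip (twprod \<theta> ?P \<xi>) \<xi>) \<le> cmod (ip (twprod \<theta> ?P \<xi>) \<xi>)" by (rule complex_Re_le_cmod)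
  also have "\<dots> \<le> l2norm (twprod \<theta> ?P \<xi>) * l2norm \<xi>" by (rule ip_cs) (use fP x in auto)
  also have "\<dots> \<le> (l1 ?P * l2norm \<xi>) * l2norm \<xi>"
    by (intro mult_right_mono twprod_l2 fP x l2norm_nonneg)
  also have "\<dots> \<le> (l1 a * l2norm \<xi>) * l2norm \<xi>"
    by (intro mult_right_mono l1P l2norm_nonneg)
  finally show ?thesis by (simp add: power2_eq_square mult.assoc)
qed

lemma Pr_lb:
  assumes a: "finsupp2 a" and a0: "a (0, 0) = 1"
    and lb: "\<And>\<eta>. finsupp2 \<eta> \<Longrightarrow> m * (l2norm \<eta>)\<^sup>2 \<le> Re (ip (twprod \<theta> a \<eta>) \<eta>)"
    and r: "0 \<le> r" "r \<le> 1" and x: "finsupp2 \<xi>"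
  shows "m * (l2norm \<xi>)\<^sup>2 \<le> Re (ip (twprod \<theta> (P_r a (complex_of_real r)) \<xi>) \<xi>)"
proof (cases "r = 1")
  case True
  have "P_r a (complex_of_real r) = a" unfolding Pr_real_eq[where a=a, OF a0] True by simp
  then show ?thesis using lb[OF x] by simp
next
  case False
  then show ?thesis using Pr_pos[OF a a0 lb _ _ x, where r=r] r by simp
qed

definition gdist :: "coeffs \<Rightarrow> real \<Rightarrow> complex \<Rightarrow> real" where
  "gdist a r0 r = (\<Sum>k\<in>supp2 a. cmod (a k) * cmod (r ^ (nat \<bar>fst k\<bar> + nat \<bar>snd k\<bar>) - complex_of_real r0 ^ (nat \<bar>fst k\<bar> + nat \<bar>snd k\<bar>)))"

lemma twnorm_Pr_diff:
  assumes a: "finsupp2 a"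
  shows "twnorm \<theta> (\<lambda>k. P_r a r k - P_r a (complex_of_real r0) k) \<le> gdist a r0 r"
proof -
  let ?e = "\<lambda>k. P_r a r k - P_r a (complex_of_real r0) k"
  have fe: "finsupp2 ?e" using a by (intro finsupp2_diff finsupp2_Pr)
  have fa: "finite (supp2 a)" using a by (simp add: finsupp2_def)
  have s: "supp2 ?e \<subseteq> supp2 a" by (auto simp: supp2_def Pr_eq split: if_splits)
  have "twnorm \<theta> ?e \<le> l1 ?e" by (rule twnorm_l1[OF fe])
  also have "\<dots> = (\<Sum>k\<in>supp2 a. cmod (?e k))" by (rule l1_eq[OF fa s])
  also have "\<dots> \<le> gdist a r0 r" unfolding gdist_def
    by (rule sum_mono) (simp add: Pr_eq norm_mult right_diff_distrib[symmetric])
  finally show ?thesis .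
qed

lemma gdist_cont: "isCont (gdist a r0) (complex_of_real r0)"
  unfolding gdist_def by (intro continuous_intros)

lemma gdist_zero: "gdist a r0 (complex_of_real r0) = 0"
  unfolding gdist_def by simp

end

theorem proposition2p3:
  fixes \<theta> :: real and a :: coeffs
  assumes "\<theta> \<notin> \<rat>"
    and "finsupp2 a"
    and "tw_strictly_pos \<theta> a"
    and "a (0, 0) = 1"
  shows "\<exists>W. open W \<and> complex_of_real ` {0..1} \<subseteq> W \<and>
           (\<forall>r\<in>W. tw_log_definable \<theta> (P_r a r))"
proof -
  have a: "finsupp2 a" and a0: "a (0, 0) = 1" using assms by auto
  have sa: "twstar \<theta> a = a" and spec: "tw_spectrum \<theta> a \<subseteq> complex_of_real ` {0<..}"
    using assms(3) by (auto simp: tw_strictly_pos_def)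
  obtain m where m: "m > 0" and lb: "\<And>\<xi>. finsupp2 \<xi> \<Longrightarrow> m * (l2norm \<xi>)\<^sup>2 \<le> Re (ip (twprod \<theta> a \<xi>) \<xi>)"
    using spectrum_lower_bound[OF a sa spec] by blast
  define M where "M = l1 a + m"
  have mM: "m \<le> M" using l1_nonneg[of a] by (simp add: M_def)
  have "\<forall>r0\<in>{0..1::real}. \<exists>\<delta>>0. \<forall>r. dist r (complex_of_real r0) < \<delta> \<longrightarrow> gdist a r0 r < m / 2"
  proof
    fix r0 :: real
    have gc: "isCont (gdist a r0) (complex_of_real r0)" by (rule gdist_cont)
    have "\<exists>\<delta>>0. \<forall>r. dist r (complex_of_real r0) < \<delta> \<longrightarrow> dist (gdist a r0 r) (gdist a r0 (complex_of_real r0)) < m / 2"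
      using gc m unfolding continuous_at_eps_delta by (meson half_gt_zero)
    then show "\<exists>\<delta>>0. \<forall>r. dist r (complex_of_real r0) < \<delta> \<longrightarrow> gdist a r0 r < m / 2"
      by (simp add: gdist_zero dist_real_def) (metis abs_ge_self le_less_trans mult_right_mono zero_le_numeral)
  qed
  then obtain \<delta> where \<delta>: "\<And>r0. r0 \<in> {0..1} \<Longrightarrow> \<delta> r0 > 0"
    "\<And>r0 r. r0 \<in> {0..1} \<Longrightarrow> dist r (complex_of_real r0) < \<delta> r0 \<Longrightarrow> gdist a r0 r < m / 2"
    by (metis bchoice)
  define W where "W = (\<Union>r0\<in>{0..1::real}. ball (complex_of_real r0) (\<delta> r0))"
  have "open W" unfolding W_def by auto
  moreover have "complex_of_real ` {0..1} \<subseteq> W" unfolding W_def using \<delta>(1) by force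
  moreover have "tw_log_definable \<theta> (P_r a r)" if r: "r \<in> W" for r
  proof -
    obtain r0 where r0: "r0 \<in> {0..1}" "dist r (complex_of_real r0) < \<delta> r0"
      using r unfolding W_def by (auto simp: dist_commute)
    let ?P0 = "P_r a (complex_of_real r0)"
    let ?e = "\<lambda>k. P_r a r k - ?P0 k"
    have fP0: "finsupp2 ?P0" by (rule finsupp2_Pr[OF a])
    have fe: "finsupp2 ?e" using a by (intro finsupp2_diff finsupp2_Pr)
    have ne: "twnorm \<theta> ?e \<le> m / 2"
      by (rule order_trans[OF twnorm_Pr_diff[OF a] less_imp_le[OF \<delta>(2)[OF r0]]])
    have spec_sub: "tw_spectrum \<theta> (P_r a r) \<subseteq> - \<real>\<^sub>\<le>\<^sub>0"
    proof
      fix z assume z: "z \<in> tw_spectrum \<theta> (P_r a r)"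
      show "z \<in> - \<real>\<^sub>\<le>\<^sub>0"
      proof
        assume "z \<in> \<real>\<^sub>\<le>\<^sub>0"
        then obtain s where s: "z = complex_of_real s" "s \<le> 0" by (auto elim: nonpos_Reals_cases)
        have inv: "tw_invertible \<theta> (\<lambda>k. ?P0 k + ?e k + complex_of_real (- s) * twone k)"
        proof (rule key_inv[OF fP0 Pr_sa[OF sa a0], where t="- s" and e="?e" and M=M and m=m])
          show "m * (l2norm \<xi>)\<^sup>2 \<le> Re (ip (twprod \<theta> ?P0 \<xi>) \<xi>)" if "finsupp2 \<xi>" for \<xi>
            using Pr_lb[OF a a0 lb _ _ that, where r=r0] r0(1) by simp
          show "Re (ip (twprod \<theta> ?P0 \<xi>) \<xi>) \<le> M * (l2norm \<xi>)\<^sup>2" if "finsupp2 \<xi>" for \<xi>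
          proof -
            have "Re (ip (twprod \<theta> ?P0 \<xi>) \<xi>) \<le> l1 a * (l2norm \<xi>)\<^sup>2"
              using Pr_ub[OF a a0 _ _ that, where r=r0 and \<theta>=\<theta>] r0(1) by simp
            also have "\<dots> \<le> M * (l2norm \<xi>)\<^sup>2" by (intro mult_right_mono) (auto simp: M_def m less_imp_le)
            finally show ?thesis .
          qed
        qed (use m mM s fe ne in auto)
        moreover have "(\<lambda>k. ?P0 k + ?e k + complex_of_real (- s) * twone k) = P_r a r - (\<lambda>k. z * twone k)"
          by (simp add: fun_eq_iff s)
        ultimately show False using z by (simp add: tw_spectrum_def)
      qed
    qed
    show ?thesis unfolding tw_log_definable_def
    proof (intro exI conjI)
      show "open (- (\<real>\<^sub>\<le>\<^sub>0 :: complex set))" using closed_nonpos_Reals_complex by (simp add: open_Compl)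
      show "tw_spectrum \<theta> (P_r a r) \<subseteq> - \<real>\<^sub>\<le>\<^sub>0" by (rule spec_sub)
      show "Ln holomorphic_on - \<real>\<^sub>\<le>\<^sub>0" by (rule holomorphic_on_Ln) auto
    qed
  qed
  ultimately show ?thesis by blast
qed


end
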